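(* Let $p\in[1,\infty]$ and let $H:\ell^p(\mathbb{Z})\to\ell^p(\mathbb{Z})$ be given by $(Hx)_n=x_{n+1}+x_{n-1}+v(n)x_n$, $n\in\mathbb{Z}$, where $v:\mathbb{Z}\to\mathbb{R}$ is periodic with period $K\in\mathbb{N}$ (i.e. $v(n+K)=v(n)$ for all $n$). Set \[ M:=\begin{pmatrix}-v(K-1)&-1\\1&0\end{pmatrix}\cdots\begin{pmatrix}-v(1)&-1\\1&0\end{pmatrix}\begin{pmatrix}-v(0)&-1\\1&0\end{pmatrix}. \] If one of the following three assumptions is satisfied: (a) $K=2$ and $v(n)\in\mathbb{R}$ for all $n\in\mathbb{Z}$; (b) $K\leq 8$ and $v(n)\in\{0,\lambda\}$ for all $n\in\mathbb{Z}$ for a fixed rational number $\lambda\in\mathbb{Q}$; (c) $K\in\mathbb{N}$ and $v(n)\in\mathbb{Z}$ for all $n\in\mathbb{Z}$; then the finite section method for $H$ is applicable if and only if $|\operatorname{tr}(M)|>2$.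
   Context: Finite section method (FSM): for a bounded operator $A$ on $\ell^p(\mathbb{Z})$ with matrix $(a_{ij})_{i,j\in\mathbb{Z}}$ w.r.t. the canonical basis, let $A_n=(a_{ij})_{i,j=-n}^n$; the FSM for $A$ is called applicable if $A$ is invertible, the matrices $A_n$ are invertible for all sufficiently large $n$, and their inverses (embedded into two-sided infinite matrices) converge strongly to $A^{-1}$.
   Formalization: For p = infinity, the embedded inverses of $A_n$ converge to $A^{-1}$ not strongly but in the sense that their difference, multiplied on either side by the projection onto coordinates -k..k, tends to 0 in operator norm for each k. The statement above fails without it. *)

theory Defs
  imports "HOL-Analysis.Analysis"
begin

definition lp :: "ereal \<Rightarrow> (int \<Rightarrow> complex) set" where
  "lp p = {x. if p = \<infinity> then bounded (range x)
              else (\<lambda>n. norm (x n) powr real_of_ereal p) summable_on UNIV}"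

definition lp_norm :: "ereal \<Rightarrow> (int \<Rightarrow> complex) \<Rightarrow> real" where
  "lp_norm p x = (if p = \<infinity> then (SUP n. norm (x n))
                  else (infsum (\<lambda>n. norm (x n) powr real_of_ereal p) UNIV) powr (1 / real_of_ereal p))"

definition bounded_lp_op :: "ereal \<Rightarrow> ((int \<Rightarrow> complex) \<Rightarrow> (int \<Rightarrow> complex)) \<Rightarrow> bool" where
  "bounded_lp_op p A \<longleftrightarrow>
     (\<forall>x\<in>lp p. A x \<in> lp p) \<and>
     (\<forall>x\<in>lp p. \<forall>y\<in>lp p. A (\<lambda>n. x n + y n) = (\<lambda>n. A x n + A y n)) \<and>
     (\<forall>x\<in>lp p. \<forall>c. A (\<lambda>n. c * x n) = (\<lambda>n. c * A x n)) \<and>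
     (\<exists>C. \<forall>x\<in>lp p. lp_norm p (A x) \<le> C * lp_norm p x)"

definition is_lp_inverse :: "ereal \<Rightarrow> ((int \<Rightarrow> complex) \<Rightarrow> (int \<Rightarrow> complex))
    \<Rightarrow> ((int \<Rightarrow> complex) \<Rightarrow> (int \<Rightarrow> complex)) \<Rightarrow> bool" where
  "is_lp_inverse p A B \<longleftrightarrow> bounded_lp_op p B \<and> (\<forall>x\<in>lp p. B (A x) = x \<and> A (B x) = x)"

definition invertible_lp :: "ereal \<Rightarrow> ((int \<Rightarrow> complex) \<Rightarrow> (int \<Rightarrow> complex)) \<Rightarrow> bool" where
  "invertible_lp p A \<longleftrightarrow> bounded_lp_op p A \<and> (\<exists>B. is_lp_inverse p A B)"

definition lp_inv :: "ereal \<Rightarrow> ((int \<Rightarrow> complex) \<Rightarrow> (int \<Rightarrow> complex)) \<Rightarrow> ((int \<Rightarrow> complex) \<Rightarrow> (int \<Rightarrow> complex))" where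
  "lp_inv p A = (SOME B. is_lp_inverse p A B)"

definition op_entry :: "((int \<Rightarrow> complex) \<Rightarrow> (int \<Rightarrow> complex)) \<Rightarrow> int \<Rightarrow> int \<Rightarrow> complex" where
  "op_entry A i j = A (\<lambda>k. if k = j then 1 else 0) i"

definition sec :: "nat \<Rightarrow> int set" where
  "sec n = {- int n .. int n}"

definition is_section_inverse :: "((int \<Rightarrow> complex) \<Rightarrow> (int \<Rightarrow> complex)) \<Rightarrow> nat \<Rightarrow> (int \<Rightarrow> int \<Rightarrow> complex) \<Rightarrow> bool" where
  "is_section_inverse A n B \<longleftrightarrow>
     (\<forall>i\<in>sec n. \<forall>j\<in>sec n.
        (\<Sum>k\<in>sec n. op_entry A i k * B k j) = (if i = j then 1 else 0) \<and>
        (\<Sum>k\<in>sec n. B i k * op_entry A k j) = (if i = j then 1 else 0))"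

definition section_invertible :: "((int \<Rightarrow> complex) \<Rightarrow> (int \<Rightarrow> complex)) \<Rightarrow> nat \<Rightarrow> bool" where
  "section_invertible A n \<longleftrightarrow> (\<exists>B. is_section_inverse A n B)"

text \<open>The inverse of A_n, embedded into a two-sided infinite matrix (zero outside the section),
  acting as an operator on sequences.\<close>
definition section_inv_op :: "((int \<Rightarrow> complex) \<Rightarrow> (int \<Rightarrow> complex)) \<Rightarrow> nat \<Rightarrow> (int \<Rightarrow> complex) \<Rightarrow> (int \<Rightarrow> complex)" where
  "section_inv_op A n x =
     (let B = (SOME B. is_section_inverse A n B)
      in (\<lambda>i. if i \<in> sec n then (\<Sum>j\<in>sec n. B i j * x j) else 0))"

definition proj :: "nat \<Rightarrow> (int \<Rightarrow> complex) \<Rightarrow> (int \<Rightarrow> complex)" where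
  "proj k x = (\<lambda>i. if i \<in> sec k then x i else 0)"

definition lp_opnorm :: "ereal \<Rightarrow> ((int \<Rightarrow> complex) \<Rightarrow> (int \<Rightarrow> complex)) \<Rightarrow> real" where
  "lp_opnorm p T = Sup {lp_norm p (T x) | x. x \<in> lp p \<and> lp_norm p x \<le> 1}"

text \<open>Strong convergence on l^p for p < infinity; for p = infinity the usual
  substitute (P-strong convergence, cf. Lindner/Roch/Rabinovich/Silbermann).\<close>
definition strong_conv :: "ereal \<Rightarrow> (nat \<Rightarrow> (int \<Rightarrow> complex) \<Rightarrow> (int \<Rightarrow> complex))
    \<Rightarrow> ((int \<Rightarrow> complex) \<Rightarrow> (int \<Rightarrow> complex)) \<Rightarrow> bool" where
  "strong_conv p Bs B \<longleftrightarrow>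
     (if p = \<infinity> then
        (\<forall>k. (\<lambda>n. lp_opnorm p (\<lambda>x. proj k (\<lambda>i. Bs n x i - B x i))) \<longlonglongrightarrow> 0 \<and>
             (\<lambda>n. lp_opnorm p (\<lambda>x. (\<lambda>i. Bs n (proj k x) i - B (proj k x) i))) \<longlonglongrightarrow> 0)
      else (\<forall>x\<in>lp p. (\<lambda>n. lp_norm p (\<lambda>i. Bs n x i - B x i)) \<longlonglongrightarrow> 0))"

definition fsm_applicable :: "ereal \<Rightarrow> ((int \<Rightarrow> complex) \<Rightarrow> (int \<Rightarrow> complex)) \<Rightarrow> bool" where
  "fsm_applicable p A \<longleftrightarrow>
     invertible_lp p A \<and>
     (\<exists>N. \<forall>n\<ge>N. section_invertible A n) \<and>
     strong_conv p (section_inv_op A) (lp_inv p A)"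

definition schroedinger :: "(int \<Rightarrow> real) \<Rightarrow> (int \<Rightarrow> complex) \<Rightarrow> (int \<Rightarrow> complex)" where
  "schroedinger v x = (\<lambda>n. x (n + 1) + x (n - 1) + complex_of_real (v n) * x n)"

definition transfer :: "real \<Rightarrow> real^2^2" where
  "transfer c = vector [vector [- c, - 1], vector [1, 0]]"

fun monodromy :: "(int \<Rightarrow> real) \<Rightarrow> nat \<Rightarrow> real^2^2" where
  "monodromy v 0 = mat 1"
| "monodromy v (Suc k) = transfer (v (int k)) ** monodromy v k"

end

theory Submission
  imports Defs
begin

lemma tangent_powr:
  fixes a m P :: real
  assumes "0 < m" "0 \<le> a" "1 \<le> P"
  shows "m powr P + P * m powr (P - 1) * (a - m) \<le> a powr P"
proof (cases "a = 0")
  case True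
  have q: "m powr (P - 1) * m = m powr P"
    using assms powr_add[of m "P - 1" 1] by simp
  have "m powr P + P * m powr (P - 1) * (a - m) = m powr P - P * (m powr (P - 1) * m)"
    using True by (simp add: algebra_simps)
  also have "\<dots> = (1 - P) * m powr P" unfolding q by (simp add: algebra_simps)
  also have "\<dots> \<le> 0" using assms by (simp add: mult_nonpos_nonneg)
  finally show ?thesis using True by simp
next
  case False
  then have a0: "a > 0" using assms by simp
  have "a powr P - m powr P \<ge> (P * m powr (P - 1)) * (a - m)"
    by (rule convex_on_imp_above_tangent[where A="{0<..}"])
       (use assms a0 powr_convex[OF assms(3)] has_real_derivative_powr[of m P] in
         \<open>auto simp: has_field_derivative_at_within interior_open\<close>)
  then show ?thesis by simp
qed

lemma infsum_sum_swap:
  fixes f :: "'i \<Rightarrow> 'j \<Rightarrow> real"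
  assumes "finite F" "\<And>i. i \<in> F \<Longrightarrow> f i summable_on A"
  shows "(\<Sum>i\<in>F. infsum (f i) A) = infsum (\<lambda>j. \<Sum>i\<in>F. f i j) A"
    and "(\<lambda>j. \<Sum>i\<in>F. f i j) summable_on A"
  using assms
proof (induction F rule: finite_induct)
  case empty
  { case 1 show ?case by simp }
  { case 2 show ?case by simp }
next
  case (insert x F)
  { case 1
    have s: "(\<lambda>j. \<Sum>i\<in>F. f i j) summable_on A" using insert 1 by auto
    have "(\<Sum>i\<in>insert x F. infsum (f i) A) = infsum (f x) A + infsum (\<lambda>j. \<Sum>i\<in>F. f i j) A"
      using insert 1 by auto
    also have "\<dots> = infsum (\<lambda>j. f x j + (\<Sum>i\<in>F. f i j)) A"
      by (rule infsum_add[symmetric]) (use 1 s in auto)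
    finally show ?case using insert by simp }
  { case 2
    have s: "(\<lambda>j. \<Sum>i\<in>F. f i j) summable_on A" using insert 2 by auto
    have "(\<lambda>j. f x j + (\<Sum>i\<in>F. f i j)) summable_on A"
      by (rule summable_on_add) (use 2 s in auto)
    then show ?case using insert by simp }
qed

lemma bij_shift_neg: "bij_betw (\<lambda>j::int. i - j) UNIV UNIV"
  by (rule bij_betwI[where g="\<lambda>j. i - j"]) auto

lemma summable_shift_neg:
  "(\<lambda>j::int. g (i - j)) summable_on UNIV \<longleftrightarrow> g summable_on UNIV"
  using summable_on_reindex_bij_betw[OF bij_shift_neg, of g i] by simp

lemma infsum_shift_neg:
  "infsum (\<lambda>j::int. g (i - j)) UNIV = infsum g UNIV"
  using infsum_reindex_bij_betw[OF bij_shift_neg, of g i] by simp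

lemma summable_kernel_bounded:
  fixes g :: "int \<Rightarrow> real"
  assumes g0: "\<And>k. g k \<ge> 0" and gs: "g summable_on UNIV"
    and c: "\<And>j. 0 \<le> c j" "\<And>j. c j \<le> X"
  shows "(\<lambda>j. g (i - j) * c j) summable_on UNIV"
    and "infsum (\<lambda>j. g (i - j) * c j) UNIV \<le> X * infsum g UNIV"
proof -
  have X0: "0 \<le> X" using c[of 0] by simp
  have s1: "(\<lambda>j. g (i - j) * X) summable_on UNIV"
    using summable_on_cmult_left[of "\<lambda>j. g (i - j)" UNIV X] summable_shift_neg[of g i] gs by simp
  show s: "(\<lambda>j. g (i - j) * c j) summable_on UNIV"
    by (rule summable_on_comparison_test[OF s1]) (use g0 c in \<open>auto intro: mult_left_mono\<close>)
  have "infsum (\<lambda>j. g (i - j) * c j) UNIV \<le> infsum (\<lambda>j. g (i - j) * X) UNIV"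
    by (rule infsum_mono[OF s s1]) (use g0 c in \<open>auto intro: mult_left_mono\<close>)
  also have "\<dots> = infsum g UNIV * X"
    using infsum_cmult_left[of X "\<lambda>j. g (i - j)" UNIV] summable_shift_neg[of g i] gs
      infsum_shift_neg[of g i] by simp
  finally show "infsum (\<lambda>j. g (i - j) * c j) UNIV \<le> X * infsum g UNIV" by (simp add: mult.commute)
qed

lemma jensen_infsum:
  fixes w a :: "int \<Rightarrow> real"
  assumes w0: "\<And>j. w j \<ge> 0" and a0: "\<And>j. a j \<ge> 0" and P: "1 \<le> P"
    and ws: "w summable_on UNIV" and was: "(\<lambda>j. w j * a j) summable_on UNIV"
    and wps: "(\<lambda>j. w j * a j powr P) summable_on UNIV"
  shows "(infsum (\<lambda>j. w j * a j) UNIV) powr P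
           \<le> (infsum w UNIV) powr (P - 1) * infsum (\<lambda>j. w j * a j powr P) UNIV"
proof -
  define S where "S = infsum w UNIV"
  define T where "T = infsum (\<lambda>j. w j * a j) UNIV"
  define R where "R = infsum (\<lambda>j. w j * a j powr P) UNIV"
  have S0: "S \<ge> 0" unfolding S_def by (rule infsum_nonneg) (use w0 in auto)
  have T0: "T \<ge> 0" unfolding T_def by (rule infsum_nonneg) (use w0 a0 in auto)
  have R0: "R \<ge> 0" unfolding R_def by (rule infsum_nonneg) (use w0 a0 in auto)
  show ?thesis
  proof (cases "S = 0 \<or> T = 0")
    case True
    show ?thesis
    proof (cases "T = 0")
      case True
      then show ?thesis using S0 R0 P unfolding T_def[symmetric] S_def[symmetric] R_def[symmetric]
        by simp
    next
      case False
      with True have "S = 0" by simp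
      then have "\<forall>j\<in>UNIV. w j = 0"
        using nonneg_infsum_le_0D[of w UNIV] ws w0 unfolding S_def by auto
      then have "T = 0" unfolding T_def by simp
      with False show ?thesis by simp
    qed
  next
    case False
    then have Sp: "S > 0" and Tp: "T > 0" using S0 T0 by auto
    define m where "m = T / S"
    have mp: "m > 0" unfolding m_def using Sp Tp by simp
    have tang: "w j * (m powr P + P * m powr (P - 1) * (a j - m)) \<le> w j * a j powr P" for j
      by (rule mult_left_mono[OF tangent_powr[OF mp a0 P] w0])
    have e: "(\<lambda>j. w j * (m powr P + P * m powr (P - 1) * (a j - m)))
             = (\<lambda>j. w j * (m powr P - P * m powr (P - 1) * m) + (w j * a j) * (P * m powr (P - 1)))"
      by (auto simp: algebra_simps)
    have s1: "(\<lambda>j. w j * (m powr P - P * m powr (P - 1) * m)) summable_on UNIV"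
      using summable_on_cmult_left[OF ws] by blast
    have s2: "(\<lambda>j. (w j * a j) * (P * m powr (P - 1))) summable_on UNIV"
      using summable_on_cmult_left[OF was] by blast
    have "infsum (\<lambda>j. w j * (m powr P + P * m powr (P - 1) * (a j - m))) UNIV
          = S * (m powr P - P * m powr (P - 1) * m) + T * (P * m powr (P - 1))"
      unfolding e infsum_add[OF s1 s2] S_def T_def
      by (simp add: infsum_cmult_left[OF ws] infsum_cmult_left[OF was])
    also have "\<dots> = S * m powr P"
      unfolding m_def using Sp by (simp add: algebra_simps)
    finally have eq: "infsum (\<lambda>j. w j * (m powr P + P * m powr (P - 1) * (a j - m))) UNIV = S * m powr P" .
    have "S * m powr P \<le> R"
      unfolding R_def eq[symmetric]
      by (rule infsum_mono[OF summable_on_add[OF s1 s2, folded e] wps]) (rule tang)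
    moreover have "S * m powr P = T powr P / S powr (P - 1)"
    proof -
      have "S powr P = S powr (P - 1) * S" using Sp powr_add[of S "P - 1" 1] by simp
      moreover have "m powr P = T powr P / S powr P" unfolding m_def
        using Sp Tp by (simp add: powr_divide)
      ultimately show ?thesis using Sp by (simp add: field_simps)
    qed
    ultimately have "T powr P / S powr (P - 1) \<le> R" by simp
    then have "T powr P \<le> S powr (P - 1) * R"
      using Sp by (simp add: divide_le_eq mult.commute)
    then show ?thesis unfolding S_def T_def R_def .
  qed
qed

lemma realp_ge1: "1 \<le> p \<Longrightarrow> p \<noteq> \<infinity> \<Longrightarrow> real_of_ereal p \<ge> 1"
  by (cases p) auto

lemma lp_fin: "p \<noteq> \<infinity> \<Longrightarrow> x \<in> lp p \<longleftrightarrow> (\<lambda>n. norm (x n) powr real_of_ereal p) summable_on UNIV"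
  by (simp add: lp_def)

lemma lp_inf: "x \<in> lp \<infinity> \<longleftrightarrow> bounded (range x)"
  by (simp add: lp_def)

lemma lp_norm_fin: "p \<noteq> \<infinity> \<Longrightarrow> lp_norm p x =
   (infsum (\<lambda>n. norm (x n) powr real_of_ereal p) UNIV) powr (1 / real_of_ereal p)"
  by (simp add: lp_norm_def)

lemma lp_norm_inf: "lp_norm \<infinity> x = (SUP n. norm (x n))"
  by (simp add: lp_norm_def)

lemma bdd_norm_inf: "x \<in> lp \<infinity> \<Longrightarrow> bdd_above (range (\<lambda>n. norm (x n)))"
  unfolding lp_inf bounded_iff bdd_above_def by auto

lemma lp_bound:
  assumes p: "1 \<le> p" and x: "x \<in> lp p"
  shows "norm (x n) \<le> lp_norm p x"
proof (cases "p = \<infinity>")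
  case True
  then show ?thesis using x bdd_norm_inf by (auto simp: lp_norm_inf intro!: cSUP_upper)
next
  case False
  define P where "P = real_of_ereal p"
  have P: "P \<ge> 1" using realp_ge1[OF p False] P_def by simp
  have s: "(\<lambda>n. norm (x n) powr P) summable_on UNIV" using x False lp_fin P_def by auto
  have "norm (x n) powr P \<le> infsum (\<lambda>n. norm (x n) powr P) UNIV"
    using finite_sum_le_infsum[OF s, of "{n}"] by simp
  then have "(norm (x n) powr P) powr (1 / P) \<le> (infsum (\<lambda>n. norm (x n) powr P) UNIV) powr (1 / P)"
    using P by (intro powr_mono2) auto
  moreover have "(norm (x n) powr P) powr (1 / P) = norm (x n)"
    using P by (simp add: powr_powr)
  ultimately show ?thesis using False by (simp add: lp_norm_fin P_def)
qed

lemma lp_norm_nonneg: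
  assumes p: "1 \<le> p" and x: "x \<in> lp p"
  shows "0 \<le> lp_norm p x"
  using lp_bound[OF p x, of 0] norm_ge_zero order_trans by blast

lemma dom_lp:
  fixes x y :: "int \<Rightarrow> complex" and g :: "int \<Rightarrow> real"
  assumes p: "1 \<le> p" and x: "x \<in> lp p" and g0: "\<And>k. g k \<ge> 0" and gs: "g summable_on UNIV"
    and y: "\<And>i. norm (y i) \<le> infsum (\<lambda>j. g (i - j) * norm (x j)) UNIV"
  shows "y \<in> lp p \<and> lp_norm p y \<le> infsum g UNIV * lp_norm p x"
proof -
  define X where "X = lp_norm p x"
  define S where "S = infsum g UNIV"
  have xb: "norm (x j) \<le> X" for j unfolding X_def by (rule lp_bound[OF p x])
  have S0: "S \<ge> 0" unfolding S_def by (rule infsum_nonneg) (use g0 in auto)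
  have X0: "X \<ge> 0" using xb[of 0] norm_ge_zero order_trans by blast
  have yb: "norm (y i) \<le> X * S" for i
    using y[of i] summable_kernel_bounded(2)[OF g0 gs, of "\<lambda>j. norm (x j)" X i] xb
    unfolding S_def by auto
  show ?thesis
  proof (cases "p = \<infinity>")
    case True
    have "bounded (range y)" unfolding bounded_iff using yb by auto
    then have "y \<in> lp p" using True lp_inf by simp
    moreover have "lp_norm p y \<le> S * X"
      unfolding True lp_norm_inf by (rule cSUP_least) (use yb in \<open>auto simp: mult.commute\<close>)
    ultimately show ?thesis unfolding S_def X_def by simp
  next
    case False
    define P where "P = real_of_ereal p"
    have P: "P \<ge> 1" using realp_ge1[OF p False] P_def by simp
    define a where "a j = norm (x j) powr P" for j
    have xs: "a summable_on UNIV" using x False lp_fin[of p x] unfolding P_def a_def[abs_def] by auto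
    define A where "A = infsum a UNIV"
    have a0: "a j \<ge> 0" for j unfolding a_def by simp
    have ab: "a j \<le> X powr P" for j unfolding a_def using xb P by (intro powr_mono2) auto
    have key: "norm (y i) powr P \<le> S powr (P - 1) * infsum (\<lambda>j. g (i - j) * a j) UNIV" for i
    proof -
      have "norm (y i) powr P \<le> (infsum (\<lambda>j. g (i - j) * norm (x j)) UNIV) powr P"
        using y[of i] P by (intro powr_mono2) auto
      also have "\<dots> \<le> (infsum (\<lambda>j. g (i - j)) UNIV) powr (P - 1) * infsum (\<lambda>j. g (i - j) * norm (x j) powr P) UNIV"
        by (rule jensen_infsum)
           (use g0 P summable_shift_neg[of g i] gs
                summable_kernel_bounded(1)[OF g0 gs, of "\<lambda>j. norm (x j)" X i] xb
                summable_kernel_bounded(1)[OF g0 gs, of a "X powr P" i] a0 ab in \<open>auto simp: a_def\<close>)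
      finally show ?thesis unfolding infsum_shift_neg S_def a_def .
    qed
    have sk: "(\<lambda>j. g (i - j) * a j) summable_on UNIV" for i
      using summable_kernel_bounded(1)[OF g0 gs, of a "X powr P" i] a0 ab by auto
    have fin: "(\<Sum>i\<in>F. norm (y i) powr P) \<le> S powr P * A" if F: "finite F" for F
    proof -
      have "(\<Sum>i\<in>F. norm (y i) powr P) \<le> (\<Sum>i\<in>F. S powr (P - 1) * infsum (\<lambda>j. g (i - j) * a j) UNIV)"
        by (rule sum_mono) (rule key)
      also have "\<dots> = S powr (P - 1) * (\<Sum>i\<in>F. infsum (\<lambda>j. g (i - j) * a j) UNIV)"
        by (simp add: sum_distrib_left)
      also have "(\<Sum>i\<in>F. infsum (\<lambda>j. g (i - j) * a j) UNIV) = infsum (\<lambda>j. \<Sum>i\<in>F. g (i - j) * a j) UNIV"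
        by (rule infsum_sum_swap(1)[OF F]) (rule sk)
      also have "\<dots> \<le> infsum (\<lambda>j. S * a j) UNIV"
      proof (rule infsum_mono)
        show "(\<lambda>j. \<Sum>i\<in>F. g (i - j) * a j) summable_on UNIV"
          by (rule infsum_sum_swap(2)[OF F]) (rule sk)
        show "(\<lambda>j. S * a j) summable_on UNIV" using summable_on_cmult_right[OF xs] by blast
        fix j
        have "(\<Sum>i\<in>F. g (i - j)) = sum g ((\<lambda>i. i - j) ` F)"
          by (subst sum.reindex) (auto simp: inj_on_def)
        also have "\<dots> \<le> S" unfolding S_def
          by (rule finite_sum_le_infsum[OF gs]) (use F g0 in auto)
        finally have "(\<Sum>i\<in>F. g (i - j)) * a j \<le> S * a j" using a0 by (intro mult_right_mono) auto
        then show "(\<Sum>i\<in>F. g (i - j) * a j) \<le> S * a j" by (simp add: sum_distrib_right)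
      qed
      also have "\<dots> = S * A" unfolding A_def using infsum_cmult_right[of S a UNIV] xs by simp
      finally have "(\<Sum>i\<in>F. norm (y i) powr P) \<le> S powr (P - 1) * (S * A)"
        using S0 by (simp add: mult_left_mono)
      also have "S powr (P - 1) * (S * A) = S powr P * A"
      proof (cases "S = 0")
        case True then show ?thesis using P by simp
      next
        case False then show ?thesis using S0 powr_add[of S "P - 1" 1] by simp
      qed
      finally show ?thesis .
    qed
    have ys: "(\<lambda>i. norm (y i) powr P) summable_on UNIV"
      by (rule nonneg_bdd_above_summable_on) (use fin in \<open>auto intro!: bdd_aboveI2\<close>)
    have yle: "infsum (\<lambda>i. norm (y i) powr P) UNIV \<le> S powr P * A"
      by (rule infsum_le_finite_sums[OF ys]) (use fin in auto)
    have A0: "A \<ge> 0" unfolding A_def by (rule infsum_nonneg) (use a0 in auto)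
    have "lp_norm p y = (infsum (\<lambda>i. norm (y i) powr P) UNIV) powr (1 / P)"
      using False by (simp add: lp_norm_fin P_def)
    also have "\<dots> \<le> (S powr P * A) powr (1 / P)"
      using yle P by (intro powr_mono2) (auto intro!: infsum_nonneg)
    also have "\<dots> = (S powr P) powr (1 / P) * A powr (1 / P)"
      using S0 A0 by (simp add: powr_mult)
    also have "(S powr P) powr (1 / P) = S" using P S0 by (simp add: powr_powr)
    also have "A powr (1 / P) = X" unfolding X_def A_def a_def using False by (simp add: lp_norm_fin P_def)
    finally have "lp_norm p y \<le> S * X" .
    moreover have "y \<in> lp p" using ys False lp_fin P_def by auto
    ultimately show ?thesis unfolding S_def X_def by simp
  qed
qed

definition kop :: "(int \<Rightarrow> int \<Rightarrow> complex) \<Rightarrow> (int \<Rightarrow> complex) \<Rightarrow> int \<Rightarrow> complex" where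
  "kop G x = (\<lambda>i. infsum (\<lambda>j. G i j * x j) UNIV)"

lemma kop_abs_summable:
  fixes g :: "int \<Rightarrow> real"
  assumes p: "1 \<le> p" and z: "z \<in> lp p" and g0: "\<And>k. g k \<ge> 0" and gs: "g summable_on UNIV"
    and b: "\<And>j. norm (G i j * x j) \<le> g (i - j) * norm (z j)"
  shows "(\<lambda>j. norm (G i j * x j)) summable_on UNIV"
    and "(\<lambda>j. G i j * x j) summable_on UNIV"
    and "norm (kop G x i) \<le> infsum (\<lambda>j. g (i - j) * norm (z j)) UNIV"
proof -
  have zb: "norm (z j) \<le> lp_norm p z" for j by (rule lp_bound[OF p z])
  have s: "(\<lambda>j. g (i - j) * norm (z j)) summable_on UNIV"
    by (rule summable_kernel_bounded(1)[OF g0 gs]) (use zb in auto)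
  show sn: "(\<lambda>j. norm (G i j * x j)) summable_on UNIV"
    by (rule summable_on_comparison_test[OF s]) (use b in auto)
  then show "(\<lambda>j. G i j * x j) summable_on UNIV"
    using summable_on_iff_abs_summable_on_complex by blast
  have "norm (kop G x i) \<le> infsum (\<lambda>j. norm (G i j * x j)) UNIV"
    unfolding kop_def by (rule norm_infsum_bound) (use sn in simp)
  also have "\<dots> \<le> infsum (\<lambda>j. g (i - j) * norm (z j)) UNIV"
    by (rule infsum_mono[OF sn s]) (rule b)
  finally show "norm (kop G x i) \<le> infsum (\<lambda>j. g (i - j) * norm (z j)) UNIV" .
qed

lemma kop_dom:
  fixes g :: "int \<Rightarrow> real"
  assumes p: "1 \<le> p" and z: "z \<in> lp p" and g0: "\<And>k. g k \<ge> 0" and gs: "g summable_on UNIV"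
    and b: "\<And>i j. norm (G i j * x j) \<le> g (i - j) * norm (z j)"
  shows "kop G x \<in> lp p \<and> lp_norm p (kop G x) \<le> infsum g UNIV * lp_norm p z"
  by (rule dom_lp[OF p z g0 gs]) (rule kop_abs_summable(3)[OF p z g0 gs b])

lemma kop_add:
  fixes g :: "int \<Rightarrow> real"
  assumes p: "1 \<le> p" and x: "x \<in> lp p" and y: "y \<in> lp p" and g0: "\<And>k. g k \<ge> 0" and gs: "g summable_on UNIV"
    and b: "\<And>i j. norm (G i j) \<le> g (i - j)"
  shows "kop G (\<lambda>n. x n + y n) = (\<lambda>n. kop G x n + kop G y n)"
proof
  fix i
  have bx: "norm (G i j * x j) \<le> g (i - j) * norm (x j)" for j
    using b[of i j] by (simp add: norm_mult mult_right_mono)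
  have by': "norm (G i j * y j) \<le> g (i - j) * norm (y j)" for j
    using b[of i j] by (simp add: norm_mult mult_right_mono)
  have sx: "(\<lambda>j. G i j * x j) summable_on UNIV" by (rule kop_abs_summable(2)[of p x g G i, OF p x g0 gs bx])
  have sy: "(\<lambda>j. G i j * y j) summable_on UNIV" by (rule kop_abs_summable(2)[of p y g G i, OF p y g0 gs by'])
  show "kop G (\<lambda>n. x n + y n) i = kop G x i + kop G y i"
    unfolding kop_def using infsum_add[OF sx sy] by (simp add: distrib_left)
qed

lemma kop_scale:
  shows "kop G (\<lambda>n. c * x n) = (\<lambda>n. c * kop G x n)"
proof
  fix i
  have "infsum (\<lambda>j. G i j * (c * x j)) UNIV = infsum (\<lambda>j. c * (G i j * x j)) UNIV"
    by (simp add: algebra_simps)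
  also have "\<dots> = c * infsum (\<lambda>j. G i j * x j) UNIV"
    by (rule infsum_cmult_right') 
  finally show "kop G (\<lambda>n. c * x n) i = c * kop G x i" unfolding kop_def .
qed

lemma bounded_lp_op_kop:
  fixes g :: "int \<Rightarrow> real"
  assumes p: "1 \<le> p" and g0: "\<And>k. g k \<ge> 0" and gs: "g summable_on UNIV"
    and b: "\<And>i j. norm (G i j) \<le> g (i - j)"
  shows "bounded_lp_op p (kop G)"
proof -
  have bb: "norm (G i j * x j) \<le> g (i - j) * norm (x j)" for x i j
    using b[of i j] by (simp add: norm_mult mult_right_mono)
  have "kop G x \<in> lp p \<and> lp_norm p (kop G x) \<le> infsum g UNIV * lp_norm p x" if "x \<in> lp p" for x
    by (rule kop_dom[OF p that g0 gs]) (rule bb)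
  then show ?thesis unfolding bounded_lp_op_def
    using kop_add[OF p _ _ g0 gs b] kop_scale by blast
qed

lemma lp_mono:
  assumes p: "1 \<le> p" and x: "x \<in> lp p" and b: "\<And>i. norm (y i) \<le> norm (x i)"
  shows "y \<in> lp p \<and> lp_norm p y \<le> lp_norm p x"
proof -
  define g :: "int \<Rightarrow> real" where "g k = (if k = 0 then 1 else 0)" for k
  have gs: "g summable_on UNIV"
    by (rule summable_on_cong_neutral[where S="{0}", THEN iffD1]) (auto simp: g_def)
  have gi: "infsum g UNIV = 1"
    using infsum_cong_neutral[of "{0}" UNIV g g] by (auto simp: g_def)
  have e: "infsum (\<lambda>j. g (i - j) * norm (x j)) UNIV = norm (x i)" for i
  proof -
    have "infsum (\<lambda>j. g (i - j) * norm (x j)) UNIV = infsum (\<lambda>j. g (i - j) * norm (x j)) {i}"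
      by (rule infsum_cong_neutral) (auto simp: g_def)
    then show ?thesis by (simp add: g_def)
  qed
  show ?thesis using dom_lp[OF p x _ gs, of y] b e gi by (auto simp: g_def)
qed

lemma lp_finite_support:
  assumes p: "1 \<le> p" and F: "finite F" and z: "\<And>i. i \<notin> F \<Longrightarrow> x i = 0"
  shows "x \<in> lp p"
proof (cases "p = \<infinity>")
  case True
  have "bounded (x ` F)" using F by (simp add: finite_imp_bounded)
  then obtain B where B: "\<And>i. i \<in> F \<Longrightarrow> norm (x i) \<le> B" unfolding bounded_iff by auto
  have "norm (x i) \<le> max B 0" for i using B[of i] z[of i] by (cases "i \<in> F") auto
  then have "bounded (range x)" unfolding bounded_iff by auto
  then show ?thesis using True lp_inf by simp
next
  case False
  have "(\<lambda>n. norm (x n) powr real_of_ereal p) summable_on UNIV"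
    by (rule summable_on_cong_neutral[where S=F, THEN iffD1]) (use z F in auto)
  then show ?thesis using False lp_fin by simp
qed

lemma lp_norm_finite_support:
  assumes p: "1 \<le> p" "p \<noteq> \<infinity>" and F: "finite F" and z: "\<And>i. i \<notin> F \<Longrightarrow> x i = 0"
  shows "lp_norm p x = (\<Sum>i\<in>F. norm (x i) powr real_of_ereal p) powr (1 / real_of_ereal p)"
proof -
  have "infsum (\<lambda>n. norm (x n) powr real_of_ereal p) UNIV = infsum (\<lambda>n. norm (x n) powr real_of_ereal p) F"
    by (rule infsum_cong_neutral) (use z in auto)
  then show ?thesis using p F by (simp add: lp_norm_fin)
qed

lemma lp_zero: "1 \<le> p \<Longrightarrow> (\<lambda>_. 0) \<in> lp p"
  by (rule lp_finite_support[of p "{}"]) auto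

lemma lp_norm_zero: "1 \<le> p \<Longrightarrow> lp_norm p (\<lambda>_. 0) = 0"
  by (cases "p = \<infinity>") (auto simp: lp_norm_inf lp_norm_fin)

definition sol :: "(int \<Rightarrow> real) \<Rightarrow> (int \<Rightarrow> complex) \<Rightarrow> bool" where
  "sol v u \<longleftrightarrow> (\<forall>n. u (n + 1) + u (n - 1) + complex_of_real (v n) * u n = 0)"

definition wr :: "(int \<Rightarrow> complex) \<Rightarrow> (int \<Rightarrow> complex) \<Rightarrow> int \<Rightarrow> complex" where
  "wr u w j = u j * w (j + 1) - u (j + 1) * w j"

lemma solD: "sol v u \<Longrightarrow> u (n + 1) = - u (n - 1) - complex_of_real (v n) * u n"
proof -
  assume "sol v u"
  then have h: "u (n + 1) + u (n - 1) + complex_of_real (v n) * u n = 0" unfolding sol_def by blast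
  have "u (n + 1) = (u (n + 1) + u (n - 1) + complex_of_real (v n) * u n) - u (n - 1) - complex_of_real (v n) * u n"
    by (simp add: algebra_simps)
  also have "\<dots> = - u (n - 1) - complex_of_real (v n) * u n" unfolding h by simp
  finally show ?thesis .
qed

lemma sol_lin: "sol v u \<Longrightarrow> sol v w \<Longrightarrow> sol v (\<lambda>n. a * u n + b * w n)"
proof -
  assume u: "sol v u" and w: "sol v w"
  show ?thesis unfolding sol_def
  proof
    fix n
    have "a * u (n + 1) + b * w (n + 1) + (a * u (n - 1) + b * w (n - 1)) + complex_of_real (v n) * (a * u n + b * w n)
       = a * (u (n + 1) + u (n - 1) + complex_of_real (v n) * u n) + b * (w (n + 1) + w (n - 1) + complex_of_real (v n) * w n)"
      by (simp add: algebra_simps)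
    then show "a * u (n + 1) + b * w (n + 1) + (a * u (n - 1) + b * w (n - 1)) + complex_of_real (v n) * (a * u n + b * w n) = 0"
      using u w unfolding sol_def by simp
  qed
qed

lemma wr_step: "sol v u \<Longrightarrow> sol v w \<Longrightarrow> wr u w j = wr u w (j - 1)"
proof -
  assume u: "sol v u" and w: "sol v w"
  have a: "u (j + 1) = - u (j - 1) - complex_of_real (v j) * u j" using solD[OF u] .
  have b: "w (j + 1) = - w (j - 1) - complex_of_real (v j) * w j" using solD[OF w] .
  show ?thesis unfolding wr_def a b by (simp add: algebra_simps)
qed

lemma wr_const: "sol v u \<Longrightarrow> sol v w \<Longrightarrow> wr u w j = wr u w k"
proof -
  assume u: "sol v u" and w: "sol v w"
  have z: "wr u w j = wr u w 0" for j
  proof (induction j rule: int_induct[where k=0])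
    case base then show ?case by simp
  next
    case (step1 i) then show ?case using wr_step[OF u w, of "i + 1"] by simp
  next
    case (step2 i) then show ?case using wr_step[OF u w, of i] by simp
  qed
  show ?thesis using z[of j] z[of k] by simp
qed

lemma wr_lin:
  "wr (\<lambda>n. a * u n + b * w n) (\<lambda>n. c * u n + d * w n) j = (a * d - b * c) * wr u w j"
  unfolding wr_def by (simp add: algebra_simps)

lemma wr_swap: "wr w u j = - wr u w j"
  unfolding wr_def by (simp add: algebra_simps)

fun fw :: "(int \<Rightarrow> real) \<Rightarrow> complex \<times> complex \<Rightarrow> nat \<Rightarrow> complex \<times> complex" where
  "fw v w 0 = w"
| "fw v w (Suc k) = (- complex_of_real (v (int k)) * fst (fw v w k) - snd (fw v w k), fst (fw v w k))"

lemma sol_fw: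
  assumes u: "sol v u"
  shows "fw (\<lambda>n. v (n + m)) (u m, u (m - 1)) k = (u (m + int k), u (m + int k - 1))"
proof (induction k)
  case 0 then show ?case by simp
next
  case (Suc k)
  have "u (m + int k + 1) = - u (m + int k - 1) - complex_of_real (v (m + int k)) * u (m + int k)"
    by (rule solD[OF u])
  moreover have "m + int k + 1 = m + int (Suc k)" by simp
  moreover have "v (int k + m) = v (m + int k)" by (simp add: add.commute)
  moreover have "m + int (Suc k) - 1 = m + int k" by simp
  ultimately show ?case using Suc by (simp only: fw.simps) simp
qed

lemma fw_linear:
  "fw v (x1, x2) k = (x1 * fst (fw v (1, 0) k) + x2 * fst (fw v (0, 1) k),
                     x1 * snd (fw v (1, 0) k) + x2 * snd (fw v (0, 1) k))"
  by (induction k) (simp_all add: algebra_simps)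

lemma fw_det:
  "fst (fw v (1, 0) k) * snd (fw v (0, 1) k) - snd (fw v (1, 0) k) * fst (fw v (0, 1) k) = 1"
proof (induction k)
  case 0 then show ?case by simp
next
  case (Suc k) then show ?case by (simp add: algebra_simps)
qed

lemma transfer_entries:
  "transfer c $ 1 $ 1 = - c" "transfer c $ 1 $ 2 = - 1" "transfer c $ 2 $ 1 = 1" "transfer c $ 2 $ 2 = 0"
  by (simp_all add: transfer_def)

lemma monodromy_entries:
  "complex_of_real (monodromy v k $ 1 $ 1) = fst (fw v (1, 0) k)
 \<and> complex_of_real (monodromy v k $ 2 $ 1) = snd (fw v (1, 0) k)
 \<and> complex_of_real (monodromy v k $ 1 $ 2) = fst (fw v (0, 1) k)
 \<and> complex_of_real (monodromy v k $ 2 $ 2) = snd (fw v (0, 1) k)"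
proof (induction k)
  case 0 then show ?case by (simp add: mat_def)
next
  case (Suc k)
  then show ?case
    by (simp add: matrix_matrix_mult_def sum_2 transfer_entries)
qed

lemma trace_monodromy:
  "complex_of_real (trace (monodromy v k)) = fst (fw v (1, 0) k) + snd (fw v (0, 1) k)"
  using monodromy_entries[of v k] by (simp add: trace_def sum_2)

lemma divmod_int_eq:
  fixes K q r :: int
  assumes "0 < K" "0 \<le> r" "r < K"
  shows "(K * q + r) div K = q" "(K * q + r) mod K = r"
  using assms by (simp_all add: add.commute)

lemma per_mod:
  assumes K: "K \<ge> 1" and per: "\<forall>n. v (n + int K) = v n"
  shows "v (n mod int K) = v n"
proof -
  have "v (r + int K * q) = v r" for r q
  proof (induction q rule: int_induct[where k=0])
    case base then show ?case by simp
  next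
    case (step1 i)
    have "v (r + int K * (i + 1)) = v (r + int K * i + int K)" by (simp add: algebra_simps)
    then show ?case using per step1 by simp
  next
    case (step2 i)
    have "v (r + int K * i) = v (r + int K * (i - 1) + int K)" by (simp add: algebra_simps)
    then show ?case using per step2 by simp
  qed
  from this[of "n mod int K" "n div int K"] show ?thesis by simp
qed

definition bloch :: "(int \<Rightarrow> real) \<Rightarrow> nat \<Rightarrow> complex \<Rightarrow> complex \<times> complex \<Rightarrow> int \<Rightarrow> complex" where
  "bloch v K \<mu> w n = \<mu> powi (n div int K) * fst (fw v w (nat (n mod int K)))"

lemma bloch_shift:
  assumes K: "K \<ge> 1" and mu: "\<mu> \<noteq> 0"
  shows "bloch v K \<mu> w (n + int K) = \<mu> * bloch v K \<mu> w n"
proof -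
  have "(n + int K) div int K = n div int K + 1" using K by simp
  moreover have "(n + int K) mod int K = n mod int K" by simp
  ultimately show ?thesis unfolding bloch_def using mu by (simp add: power_int_add)
qed

lemma bloch_sol:
  assumes K: "K \<ge> 1" and per: "\<forall>n. v (n + int K) = v n" and mu: "\<mu> \<noteq> 0"
    and eig: "fw v w K = (\<mu> * fst w, \<mu> * snd w)"
  shows "sol v (bloch v K \<mu> w)"
  unfolding sol_def
proof
  fix n
  define q where "q = n div int K"
  define r where "r = n mod int K"
  define R where "R = nat r"
  define b where "b k = fst (fw v w k)" for k
  have Kp: "int K > 0" using K by simp
  have r0: "0 \<le> r" and rK: "r < int K" unfolding r_def using Kp by auto
  have n_eq: "n = int K * q + r" unfolding q_def r_def by simp
  have Rr: "int R = r" unfolding R_def using r0 by simp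
  have bn: "bloch v K \<mu> w n = \<mu> powi q * b R"
    unfolding bloch_def q_def r_def R_def b_def by simp
  have bn1: "bloch v K \<mu> w (n + 1) = \<mu> powi q * b (Suc R)"
  proof (cases "r + 1 < int K")
    case True
    have e: "n + 1 = int K * q + (r + 1)" using n_eq by simp
    have "(n + 1) div int K = q" "(n + 1) mod int K = r + 1"
      unfolding e using divmod_int_eq[OF Kp, of "r + 1" q] True r0 by auto
    moreover have "nat (r + 1) = Suc R" using Rr by auto
    ultimately show ?thesis unfolding bloch_def b_def by simp
  next
    case False
    then have rK1: "r + 1 = int K" using rK by simp
    have e: "n + 1 = int K * (q + 1) + 0" using n_eq rK1 by (simp add: algebra_simps)
    have "(n + 1) div int K = q + 1" "(n + 1) mod int K = 0"
      unfolding e using divmod_int_eq[OF Kp, of 0 "q + 1"] Kp by auto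
    moreover have "Suc R = K" using Rr rK1 by simp
    ultimately show ?thesis unfolding bloch_def b_def using mu eig
      by (simp add: power_int_add)
  qed
  have bnm1: "bloch v K \<mu> w (n - 1) = \<mu> powi q * snd (fw v w R)"
  proof (cases "r \<ge> 1")
    case True
    have e: "n - 1 = int K * q + (r - 1)" using n_eq by simp
    have "(n - 1) div int K = q" "(n - 1) mod int K = r - 1"
      unfolding e using divmod_int_eq[OF Kp, of "r - 1" q] True rK by auto
    moreover obtain R' where R': "R = Suc R'" using True Rr by (cases R) auto
    moreover have "nat (r - 1) = R'" using Rr R' by auto
    ultimately show ?thesis unfolding bloch_def by simp
  next
    case False
    then have r00: "r = 0" using r0 by simp
    have e: "n - 1 = int K * (q - 1) + (int K - 1)" using n_eq r00 by (simp add: algebra_simps)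
    have "(n - 1) div int K = q - 1" "(n - 1) mod int K = int K - 1"
      unfolding e using divmod_int_eq[OF Kp, of "int K - 1" "q - 1"] Kp by auto
    moreover obtain K' where K': "K = Suc K'" using K by (cases K) auto
    moreover have "nat (int K - 1) = K'" using K' by simp
    moreover have "R = 0" using r00 R_def by simp
    moreover have "\<mu> powi (q - 1) * (\<mu> * snd w) = \<mu> powi q * snd w"
      using mu by (simp add: power_int_diff field_simps)
    ultimately show ?thesis unfolding bloch_def using eig by simp
  qed
  have vn: "v n = v (int R)" using per_mod[OF K per, of n] Rr r_def by simp
  have bS: "b (Suc R) = - complex_of_real (v (int R)) * b R - snd (fw v w R)" unfolding b_def by simp
  then show "bloch v K \<mu> w (n + 1) + bloch v K \<mu> w (n - 1) + complex_of_real (v n) * bloch v K \<mu> w n = 0"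
  proof -
    have "\<mu> powi q * b (Suc R) + \<mu> powi q * snd (fw v w R) + complex_of_real (v (int R)) * (\<mu> powi q * b R)
      = \<mu> powi q * (b (Suc R) + snd (fw v w R) + complex_of_real (v (int R)) * b R)"
      by (simp add: algebra_simps)
    also have "\<dots> = 0" using bS by simp
    finally show ?thesis unfolding bn bn1 bnm1 vn .
  qed
qed

lemma bloch_init:
  assumes K: "K \<ge> 1" and mu: "\<mu> \<noteq> 0"
    and eig: "fw v w K = (\<mu> * fst w, \<mu> * snd w)"
  shows "bloch v K \<mu> w 0 = fst w" "bloch v K \<mu> w (-1) = snd w"
proof -
  show "bloch v K \<mu> w 0 = fst w" unfolding bloch_def by simp
  obtain K' where K': "K = Suc K'" using K by (cases K) auto
  have "(-1::int) div int K = -1" "(-1::int) mod int K = int K - 1"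
    using divmod_int_eq[of "int K" "int K - 1" "-1"] K by (auto simp: algebra_simps)
  moreover have "nat (int K - 1) = K'" using K' by simp
  ultimately show "bloch v K \<mu> w (-1) = snd w" unfolding bloch_def using eig K' mu
    by (simp add: power_int_minus field_simps)
qed

definition green :: "(int \<Rightarrow> complex) \<Rightarrow> (int \<Rightarrow> complex) \<Rightarrow> int \<Rightarrow> int \<Rightarrow> complex" where
  "green \<phi> \<psi> i j = \<phi> (min i j) * \<psi> (max i j) / wr \<phi> \<psi> 0"

lemma green_sym: "green \<phi> \<psi> i j = green \<phi> \<psi> j i"
  unfolding green_def by (simp add: min.commute max.commute)

lemma green_id:
  assumes f: "sol v \<phi>" and g: "sol v \<psi>" and W: "wr \<phi> \<psi> 0 \<noteq> 0"
  shows "green \<phi> \<psi> (i + 1) j + green \<phi> \<psi> (i - 1) j + complex_of_real (v i) * green \<phi> \<psi> i j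
         = (if i = j then 1 else 0)"
proof -
  define W where "W = wr \<phi> \<psi> 0"
  have fi: "\<phi> (i + 1) + \<phi> (i - 1) + complex_of_real (v i) * \<phi> i = 0" using f unfolding sol_def by blast
  have gi: "\<psi> (i + 1) + \<psi> (i - 1) + complex_of_real (v i) * \<psi> i = 0" using g unfolding sol_def by blast
  consider "i < j" | "i = j" | "i > j" by linarith
  then show ?thesis
  proof cases
    case 1
    then have "min (i + 1) j = i + 1" "max (i + 1) j = j" "min (i - 1) j = i - 1" "max (i - 1) j = j"
      "min i j = i" "max i j = j" by auto
    then have "green \<phi> \<psi> (i + 1) j + green \<phi> \<psi> (i - 1) j + complex_of_real (v i) * green \<phi> \<psi> i j
       = (\<phi> (i + 1) + \<phi> (i - 1) + complex_of_real (v i) * \<phi> i) * \<psi> j / W"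
      unfolding green_def W_def using W by (simp add: field_simps)
    then show ?thesis using fi 1 by simp
  next
    case 3
    then have "min (i + 1) j = j" "max (i + 1) j = i + 1" "min (i - 1) j = j" "max (i - 1) j = i - 1"
      "min i j = j" "max i j = i" by auto
    then have "green \<phi> \<psi> (i + 1) j + green \<phi> \<psi> (i - 1) j + complex_of_real (v i) * green \<phi> \<psi> i j
       = \<phi> j * (\<psi> (i + 1) + \<psi> (i - 1) + complex_of_real (v i) * \<psi> i) / W"
      unfolding green_def W_def using W by (simp add: field_simps)
    then show ?thesis using gi 3 by simp
  next
    case 2
    have e: "\<phi> (i - 1) = - \<phi> (i + 1) - complex_of_real (v i) * \<phi> i" using fi
      by (simp add: eq_neg_iff_add_eq_0 algebra_simps)
    have "green \<phi> \<psi> (i + 1) j + green \<phi> \<psi> (i - 1) j + complex_of_real (v i) * green \<phi> \<psi> i j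
       = (\<phi> i * \<psi> (i + 1) + \<phi> (i - 1) * \<psi> i + complex_of_real (v i) * \<phi> i * \<psi> i) / W"
      unfolding green_def W_def 2 using W by (simp add: field_simps)
    also have "\<dots> = wr \<phi> \<psi> i / W" unfolding e wr_def by (simp add: algebra_simps)
    also have "wr \<phi> \<psi> i = W" unfolding W_def by (rule wr_const[OF f g])
    finally show ?thesis using 2 W W_def by simp
  qed
qed

lemma green_id2:
  assumes f: "sol v \<phi>" and g: "sol v \<psi>" and W: "wr \<phi> \<psi> 0 \<noteq> 0"
  shows "green \<phi> \<psi> i (j + 1) + green \<phi> \<psi> i (j - 1) + complex_of_real (v j) * green \<phi> \<psi> i j
         = (if i = j then 1 else 0)"
  using green_id[OF f g W, of j i] by (simp add: green_sym[of _ _ i])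

lemma infsum_delta: "infsum (\<lambda>j. (if i = j then 1 else 0) * x j) UNIV = (x i :: complex)"
proof -
  have "infsum (\<lambda>j. (if i = j then 1 else 0) * x j) UNIV = infsum (\<lambda>j. (if i = j then 1 else 0) * x j) {i}"
    by (rule infsum_cong_neutral) auto
  then show ?thesis by simp
qed

lemma summable_bounded_kernel:
  fixes g :: "int \<Rightarrow> real" and G :: "int \<Rightarrow> int \<Rightarrow> complex" and y :: "int \<Rightarrow> complex"
  assumes g0: "\<And>k. g k \<ge> 0" and gs: "g summable_on UNIV"
    and b: "\<And>j. norm (G i j) \<le> g (i - j)" and y: "\<And>j. norm (y j) \<le> B"
  shows "(\<lambda>j. G i j * y j) summable_on UNIV"
proof -
  have s: "(\<lambda>j. g (i - j) * B) summable_on UNIV"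
    using summable_on_cmult_left[of "\<lambda>j. g (i - j)" UNIV B] summable_shift_neg[of g i] gs by simp
  have nb: "norm (G i j * y j) \<le> g (i - j) * B" for j
  proof -
    have "norm (G i j) * norm (y j) \<le> g (i - j) * B"
      by (rule mult_mono[OF b y]) (use g0 in auto)
    then show ?thesis by (simp add: norm_mult)
  qed
  have "(\<lambda>j. norm (G i j * y j)) summable_on UNIV"
    by (rule summable_on_comparison_test[OF s]) (use nb in auto)
  then show ?thesis using summable_on_iff_abs_summable_on_complex by blast
qed

lemma H_kop:
  fixes g :: "int \<Rightarrow> real"
  assumes p: "1 \<le> p" and x: "x \<in> lp p" and g0: "\<And>k. g k \<ge> 0" and gs: "g summable_on UNIV"
    and b: "\<And>i j. norm (G i j) \<le> g (i - j)"
    and id: "\<And>i j. G (i + 1) j + G (i - 1) j + complex_of_real (v i) * G i j = (if i = j then 1 else 0)"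
  shows "schroedinger v (kop G x) = x"
proof
  fix i
  have xb: "norm (x j) \<le> lp_norm p x" for j by (rule lp_bound[OF p x])
  have s: "(\<lambda>j. G k j * x j) summable_on UNIV" for k
    by (rule summable_bounded_kernel[OF g0 gs b xb])
  have "schroedinger v (kop G x) i
      = infsum (\<lambda>j. G (i + 1) j * x j) UNIV + infsum (\<lambda>j. G (i - 1) j * x j) UNIV
        + complex_of_real (v i) * infsum (\<lambda>j. G i j * x j) UNIV"
    unfolding schroedinger_def kop_def by simp
  also have "complex_of_real (v i) * infsum (\<lambda>j. G i j * x j) UNIV = infsum (\<lambda>j. complex_of_real (v i) * G i j * x j) UNIV"
    using infsum_cmult_right'[of "complex_of_real (v i)" "\<lambda>j. G i j * x j" UNIV] by (simp add: mult.assoc)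
  also have "infsum (\<lambda>j. G (i + 1) j * x j) UNIV + infsum (\<lambda>j. G (i - 1) j * x j) UNIV
      = infsum (\<lambda>j. G (i + 1) j * x j + G (i - 1) j * x j) UNIV"
    by (rule infsum_add[symmetric]) (use s in auto)
  also have "\<dots> + infsum (\<lambda>j. complex_of_real (v i) * G i j * x j) UNIV
      = infsum (\<lambda>j. (G (i + 1) j * x j + G (i - 1) j * x j) + complex_of_real (v i) * G i j * x j) UNIV"
    by (rule infsum_add[symmetric])
       (use s summable_on_add[OF s s] summable_on_cmult_right[OF s[of i], of "complex_of_real (v i)"]
        in \<open>auto simp: mult.assoc\<close>)
  also have "\<dots> = infsum (\<lambda>j. (G (i + 1) j + G (i - 1) j + complex_of_real (v i) * G i j) * x j) UNIV"
    by (simp add: algebra_simps)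
  also have "\<dots> = x i" unfolding id by (rule infsum_delta)
  finally show "schroedinger v (kop G x) i = x i" .
qed

lemma bij_plus1: "bij_betw (\<lambda>j::int. j + c) UNIV UNIV"
  by (rule bij_betwI[where g="\<lambda>j. j - c"]) auto

lemma kop_H:
  fixes g :: "int \<Rightarrow> real"
  assumes p: "1 \<le> p" and x: "x \<in> lp p" and g0: "\<And>k. g k \<ge> 0" and gs: "g summable_on UNIV"
    and b: "\<And>i j. norm (G i j) \<le> g (i - j)" and vb: "\<And>n. \<bar>v n\<bar> \<le> V"
    and id: "\<And>i j. G i (j + 1) + G i (j - 1) + complex_of_real (v j) * G i j = (if i = j then 1 else 0)"
  shows "kop G (schroedinger v x) = x"
proof
  fix i
  have xb: "norm (x j) \<le> lp_norm p x" for j by (rule lp_bound[OF p x])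
  have xb1: "norm (x (j + 1)) \<le> lp_norm p x" for j by (rule xb)
  have xb2: "norm (x (j - 1)) \<le> lp_norm p x" for j by (rule xb)
  have xb3: "norm (complex_of_real (v j) * x j) \<le> V * lp_norm p x" for j
    using vb[of j] xb[of j] by (simp add: norm_mult mult_mono)
  have s1: "(\<lambda>j. G i j * x (j + 1)) summable_on UNIV"
    by (rule summable_bounded_kernel[OF g0 gs b xb1])
  have s2: "(\<lambda>j. G i j * x (j - 1)) summable_on UNIV"
    by (rule summable_bounded_kernel[OF g0 gs b xb2])
  have s3: "(\<lambda>j. G i j * (complex_of_real (v j) * x j)) summable_on UNIV"
    by (rule summable_bounded_kernel[OF g0 gs b xb3])
  have r1: "infsum (\<lambda>j. G i j * x (j + 1)) UNIV = infsum (\<lambda>j. G i (j - 1) * x j) UNIV"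
    using infsum_reindex_bij_betw[OF bij_plus1[of 1], of "\<lambda>j. G i (j - 1) * x j"] by simp
  have t1: "(\<lambda>j. G i (j - 1) * x j) summable_on UNIV"
    using summable_on_reindex_bij_betw[OF bij_plus1[of 1], of "\<lambda>j. G i (j - 1) * x j"] s1 by simp
  have r2: "infsum (\<lambda>j. G i j * x (j - 1)) UNIV = infsum (\<lambda>j. G i (j + 1) * x j) UNIV"
    using infsum_reindex_bij_betw[OF bij_plus1[of "-1"], of "\<lambda>j. G i (j + 1) * x j"] by simp
  have t2: "(\<lambda>j. G i (j + 1) * x j) summable_on UNIV"
    using summable_on_reindex_bij_betw[OF bij_plus1[of "-1"], of "\<lambda>j. G i (j + 1) * x j"] s2 by simp
  have "kop G (schroedinger v x) i
     = infsum (\<lambda>j. G i j * x (j + 1) + G i j * x (j - 1) + G i j * (complex_of_real (v j) * x j)) UNIV"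
    unfolding kop_def schroedinger_def by (simp add: algebra_simps)
  also have "\<dots> = infsum (\<lambda>j. G i j * x (j + 1) + G i j * x (j - 1)) UNIV
                  + infsum (\<lambda>j. G i j * (complex_of_real (v j) * x j)) UNIV"
    by (rule infsum_add) (use summable_on_add[OF s1 s2] s3 in auto)
  also have "infsum (\<lambda>j. G i j * x (j + 1) + G i j * x (j - 1)) UNIV
      = infsum (\<lambda>j. G i j * x (j + 1)) UNIV + infsum (\<lambda>j. G i j * x (j - 1)) UNIV"
    by (rule infsum_add[OF s1 s2])
  also have "\<dots> = infsum (\<lambda>j. G i (j - 1) * x j + G i (j + 1) * x j) UNIV"
    unfolding r1 r2 by (rule infsum_add[symmetric, OF t1 t2])
  also have "\<dots> + infsum (\<lambda>j. G i j * (complex_of_real (v j) * x j)) UNIV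
     = infsum (\<lambda>j. (G i (j - 1) * x j + G i (j + 1) * x j) + G i j * (complex_of_real (v j) * x j)) UNIV"
    by (rule infsum_add[symmetric]) (use summable_on_add[OF t1 t2] s3 in auto)
  also have "\<dots> = infsum (\<lambda>j. (G i (j + 1) + G i (j - 1) + complex_of_real (v j) * G i j) * x j) UNIV"
    by (simp add: algebra_simps)
  also have "\<dots> = x i" unfolding id by (rule infsum_delta)
  finally show "kop G (schroedinger v x) i = x i" .
qed

fun evalp :: "int list \<Rightarrow> 'a::comm_ring_1 \<Rightarrow> 'a" where
  "evalp [] x = 0"
| "evalp (c # cs) x = of_int c + x * evalp cs x"

fun padd :: "int list \<Rightarrow> int list \<Rightarrow> int list" where
  "padd [] ys = ys"
| "padd xs [] = xs"
| "padd (x # xs) (y # ys) = (x + y) # padd xs ys"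

definition pstep :: "bool \<Rightarrow> int list \<times> int list \<Rightarrow> int list \<times> int list" where
  "pstep b PQ = (padd (if b then 0 # map uminus (fst PQ) else []) (map uminus (snd PQ)), fst PQ)"

fun dps :: "bool list \<Rightarrow> nat \<Rightarrow> int list \<times> int list" where
  "dps bs 0 = ([0], [1])"
| "dps bs (Suc k) = pstep (bs ! k) (dps bs k)"

definition rstrip :: "int list \<Rightarrow> int list" where
  "rstrip P = rev (dropWhile (\<lambda>c. c = 0) (rev P))"

definition strip :: "int list \<Rightarrow> int list" where
  "strip P = dropWhile (\<lambda>c. c = 0) (rstrip P)"

definition goodval :: "int list \<Rightarrow> int list \<Rightarrow> rat \<Rightarrow> bool" where
  "goodval P Q r \<longleftrightarrow> evalp P r \<noteq> 0 \<or> evalp Q r = 1 \<or> evalp Q r = -1"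

definition check_pat :: "bool list \<Rightarrow> bool" where
  "check_pat bs = (let PQ = dps bs (length bs); P = fst PQ; Q = snd PQ in
     if list_all (\<lambda>c. c = 0) P then rstrip Q = [1] \<or> rstrip Q = [-1]
     else goodval P Q 0 \<and>
       (let P' = strip P in
        list_all (\<lambda>a. list_all (\<lambda>b. a = 0 \<or> goodval P Q (of_int a / of_int b)) [1..\<bar>last P'\<bar>]) [-\<bar>hd P'\<bar>..\<bar>hd P'\<bar>]))"

definition check_all :: bool where
  "check_all = list_all (\<lambda>K. list_all check_pat (List.n_lists K [True, False])) [1..<9]"

lemma check_all_true: check_all by code_simp

lemma evalp_padd: "evalp (padd xs ys) x = evalp xs x + evalp ys x"
  by (induction xs ys rule: padd.induct) (simp_all add: algebra_simps)

lemma evalp_neg: "evalp (map uminus xs) x = - evalp xs x"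
  by (induction xs) (simp_all add: algebra_simps)

lemma evalp_append: "evalp (xs @ ys) x = evalp xs x + x ^ length xs * evalp ys x"
  by (induction xs) (simp_all add: algebra_simps)

lemma evalp_zeros: "list_all (\<lambda>c. c = 0) xs \<Longrightarrow> evalp xs x = 0"
  by (induction xs) auto

lemma evalp_rstrip: "evalp (rstrip P) x = evalp P x"
proof -
  have "P = rev (takeWhile (\<lambda>c. c = 0) (rev P) @ dropWhile (\<lambda>c. c = 0) (rev P))"
    by (simp only: takeWhile_dropWhile_id rev_rev_ident)
  also have "\<dots> = rstrip P @ rev (takeWhile (\<lambda>c. c = 0) (rev P))" unfolding rstrip_def by (simp only: rev_append)
  finally have e: "P = rstrip P @ rev (takeWhile (\<lambda>c. c = 0) (rev P))" .
  have z: "list_all (\<lambda>c. c = 0) (rev (takeWhile (\<lambda>c. c = 0) (rev P)))"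
    by (simp add: list_all_iff) (meson set_takeWhileD)
  have "evalp P x = evalp (rstrip P @ rev (takeWhile (\<lambda>c. c = 0) (rev P))) x" using e by metis
  also have "\<dots> = evalp (rstrip P) x" unfolding evalp_append evalp_zeros[OF z] by simp
  finally show ?thesis by simp
qed

lemma evalp_lstrip: "evalp P x = x ^ length (takeWhile (\<lambda>c. c = 0) P) * evalp (dropWhile (\<lambda>c. c = 0) P) x"
proof -
  have z: "list_all (\<lambda>c. c = 0) (takeWhile (\<lambda>c. c = 0) P)"
    by (simp add: list_all_iff) (meson set_takeWhileD)
  have "evalp P x = evalp (takeWhile (\<lambda>c. c = 0) P @ dropWhile (\<lambda>c. c = 0) P) x" by simp
  also have "\<dots> = x ^ length (takeWhile (\<lambda>c. c = 0) P) * evalp (dropWhile (\<lambda>c. c = 0) P) x"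
    unfolding evalp_append evalp_zeros[OF z] by simp
  finally show ?thesis .
qed

lemma evalp_strip: "(x::'a::idom) \<noteq> 0 \<Longrightarrow> evalp P x = 0 \<longleftrightarrow> evalp (strip P) x = 0"
  unfolding strip_def using evalp_lstrip[of "rstrip P" x] evalp_rstrip[of P x] by simp

lemma strip_props:
  assumes nz: "\<not> list_all (\<lambda>c. c = 0) P"
  shows "strip P \<noteq> []" "hd (strip P) \<noteq> 0" "last (strip P) \<noteq> 0"
proof -
  have d: "dropWhile (\<lambda>c. c = 0) (rev P) \<noteq> []" using nz by (simp add: dropWhile_eq_Nil_conv list_all_iff)
  have lr: "last (rstrip P) \<noteq> 0" unfolding rstrip_def using d hd_dropWhile[OF d] by (simp add: last_rev)
  have rn: "rstrip P \<noteq> []" unfolding rstrip_def using d by simp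
  have ne: "\<not> (\<forall>x\<in>set (rstrip P). x = 0)" using lr rn by auto
  show sn: "strip P \<noteq> []" unfolding strip_def using ne by (simp add: dropWhile_eq_Nil_conv)
  show "hd (strip P) \<noteq> 0" using hd_dropWhile[of "\<lambda>c. c = 0" "rstrip P"] sn unfolding strip_def by simp
  have "rstrip P = takeWhile (\<lambda>c. c = 0) (rstrip P) @ strip P" unfolding strip_def by simp
  then have "last (rstrip P) = last (strip P)" using sn by (metis last_append)
  then show "last (strip P) \<noteq> 0" using lr by simp
qed

lemma evalp_of_rat: "evalp c (of_rat r :: 'a::field_char_0) = of_rat (evalp c r)"
  by (induction c) (simp_all add: of_rat_add of_rat_mult)

fun homog :: "int list \<Rightarrow> int \<Rightarrow> int \<Rightarrow> int" where
  "homog [] a b = 0"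
| "homog (c # cs) a b = c * b ^ length cs + a * homog cs a b"

lemma homog_eval:
  assumes b: "b \<noteq> 0" and c: "c \<noteq> []"
  shows "evalp c (of_int a / of_int b :: rat) * of_int b ^ (length c - 1) = of_int (homog c a b)"
  using c
proof (induction c)
  case Nil then show ?case by simp
next
  case (Cons x cs)
  show ?case
  proof (cases "cs = []")
    case True then show ?thesis by simp
  next
    case False
    then obtain n where n: "length cs = Suc n" by (cases cs) auto
    have "evalp (x # cs) (of_int a / of_int b :: rat) * of_int b ^ (length (x # cs) - 1)
        = of_int x * of_int b ^ length cs + of_int a * (evalp cs (of_int a / of_int b) * of_int b ^ (length cs - 1))"
      using b n by (simp add: field_simps)
    also have "\<dots> = of_int (homog (x # cs) a b)" using Cons.IH[OF False] by simp
    finally show ?thesis .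
  qed
qed

lemma homog_last: "c \<noteq> [] \<Longrightarrow> b dvd (homog c a b - last c * a ^ (length c - 1))"
proof (induction c)
  case Nil then show ?case by simp
next
  case (Cons x cs)
  show ?case
  proof (cases "cs = []")
    case True then show ?thesis by simp
  next
    case False
    then obtain n where n: "length cs = Suc n" by (cases cs) auto
    have d1: "b dvd x * b ^ length cs" using n by simp
    have d2: "b dvd a * (homog cs a b - last cs * a ^ (length cs - 1))"
      using Cons.IH[OF False] by simp
    have l: "last (x # cs) = last cs" using False by simp
    have pw: "a ^ (length (x # cs) - 1) = a * a ^ (length cs - 1)" using n by simp
    have e: "homog (x # cs) a b - last (x # cs) * a ^ (length (x # cs) - 1)
        = x * b ^ length cs + a * (homog cs a b - last cs * a ^ (length cs - 1))"
      unfolding l pw by (simp add: algebra_simps)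
    show ?thesis unfolding e using d1 d2 by (rule dvd_add)
  qed
qed

lemma rat_root:
  assumes c: "c \<noteq> []" and b: "b > 0" and cop: "coprime a b"
    and z: "evalp c (of_int a / of_int b :: rat) = 0"
  shows "a dvd hd c" and "b dvd last c"
proof -
  have h0: "homog c a b = 0" using homog_eval[of b c a] c b z by simp
  obtain x cs where xcs: "c = x # cs" using c by (cases c) auto
  have "a dvd x * b ^ length cs" using h0 unfolding xcs by (simp add: dvd_add_left_iff[symmetric]) (metis add.commute add_eq_0_iff dvd_minus_iff dvd_triv_left)
  moreover have "coprime a (b ^ length cs)" using cop by simp
  ultimately show "a dvd hd c" unfolding xcs by (simp add: coprime_dvd_mult_left_iff)
  have "b dvd last c * a ^ (length c - 1)" using homog_last[OF c, of b a] h0 by simp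
  moreover have "coprime b (a ^ (length c - 1))" using cop by (simp add: coprime_commute)
  ultimately show "b dvd last c" by (simp add: coprime_dvd_mult_left_iff)
qed

lemma check_pat_sound:
  fixes r :: rat
  assumes ch: "check_pat bs" and z: "evalp (fst (dps bs (length bs))) r = 0"
  shows "evalp (snd (dps bs (length bs))) r = 1 \<or> evalp (snd (dps bs (length bs))) r = -1"
proof -
  define P where "P = fst (dps bs (length bs))"
  define Q where "Q = snd (dps bs (length bs))"
  have zP: "evalp P r = 0" using z P_def by simp
  show ?thesis
  proof (cases "list_all (\<lambda>c. c = 0) P")
    case True
    then have "rstrip Q = [1] \<or> rstrip Q = [-1]" using ch unfolding check_pat_def Let_def P_def Q_def by simp
    then have "evalp (rstrip Q) r = 1 \<or> evalp (rstrip Q) r = -1" by auto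
    then show ?thesis unfolding evalp_rstrip Q_def .
  next
    case False
    have g0: "goodval P Q 0" and la: "list_all (\<lambda>a. list_all (\<lambda>b. a = 0 \<or> goodval P Q (of_int a / of_int b)) [1..\<bar>last (strip P)\<bar>]) [-\<bar>hd (strip P)\<bar>..\<bar>hd (strip P)\<bar>]"
      using ch False unfolding check_pat_def Let_def P_def Q_def by auto
    have "goodval P Q r"
    proof (cases "r = 0")
      case True then show ?thesis using g0 by simp
    next
      case False
      obtain a b where r: "r = Fract a b" and b: "b > 0" and cop: "coprime a b" by (cases r) auto
      have rq: "r = of_int a / of_int b" unfolding r by (simp add: Fract_of_int_quotient)
      have a0: "a \<noteq> 0" using False rq by auto
      have zs: "evalp (strip P) (of_int a / of_int b :: rat) = 0" using zP evalp_strip[OF False, of P] rq by simp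
      note sp = strip_props[OF \<open>\<not> list_all (\<lambda>c. c = 0) P\<close>]
      have ad: "a dvd hd (strip P)" and bd: "b dvd last (strip P)" using rat_root[OF sp(1) b cop zs] by auto
      have "\<bar>a\<bar> \<le> \<bar>hd (strip P)\<bar>" by (rule dvd_imp_le_int[OF sp(2) ad])
      moreover have "\<bar>b\<bar> \<le> \<bar>last (strip P)\<bar>" by (rule dvd_imp_le_int[OF sp(3) bd])
      ultimately have "a \<in> set [-\<bar>hd (strip P)\<bar>..\<bar>hd (strip P)\<bar>]" "b \<in> set [1..\<bar>last (strip P)\<bar>]"
        using b by auto
      then have "a = 0 \<or> goodval P Q (of_int a / of_int b)" using la unfolding list_all_iff by blast
      then show ?thesis using a0 rq by simp
    qed
    then show ?thesis using zP unfolding goodval_def Q_def by simp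
  qed
qed

lemma check_all_sound:
  fixes r :: rat
  assumes "1 \<le> length bs" "length bs \<le> 8" "evalp (fst (dps bs (length bs))) r = 0"
  shows "evalp (snd (dps bs (length bs))) r = 1 \<or> evalp (snd (dps bs (length bs))) r = -1"
proof -
  have "bs \<in> set (List.n_lists (length bs) [True, False])" by (auto simp: set_n_lists)
  moreover have "length bs \<in> set [1..<9]" using assms by auto
  ultimately have "check_pat bs" using check_all_true unfolding check_all_def list_all_iff by blast
  then show ?thesis using check_pat_sound assms(3) by blast
qed

lemma uniq_zero:
  assumes u: "sol v u" and z: "u m = 0" "u (m - 1) = 0"
  shows "u n = 0"
proof -
  have "u i = 0 \<and> u (i - 1) = 0" for i
  proof (induction i rule: int_induct[where k=m])
    case base then show ?case using z by simp
  next
    case (step1 i)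
    then show ?case using solD[OF u, of i] by simp
  next
    case (step2 i)
    have "u (i - 1 + 1) + u (i - 1 - 1) + complex_of_real (v (i - 1)) * u (i - 1) = 0"
      using u unfolding sol_def by blast
    then show ?case using step2 by simp
  qed
  then show ?thesis by blast
qed

lemma fw_scale:
  "fw v (c * x1, c * x2) k = (c * fst (fw v (x1, x2) k), c * snd (fw v (x1, x2) k))"
  by (induction k) (simp_all add: algebra_simps)

lemma NV_core:
  assumes u: "sol v u" and bl: "\<And>n. u (n + int K) = \<mu> * u n"
    and z: "u m = 0" and nz: "u (m - 1) \<noteq> 0"
  shows "fst (fw (\<lambda>n. v (n + m)) (0, 1) K) = 0"
    and "snd (fw (\<lambda>n. v (n + m)) (0, 1) K) = \<mu>"
    and "fst (fw (\<lambda>n. v (n + m)) (1, 0) K) * \<mu> = 1"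
proof -
  define y where "y = u (m - 1)"
  have f: "fw (\<lambda>n. v (n + m)) (u m, u (m - 1)) K = (u (m + int K), u (m + int K - 1))"
    by (rule sol_fw[OF u])
  have e: "fw (\<lambda>n. v (n + m)) (u m, u (m - 1)) K
     = (y * fst (fw (\<lambda>n. v (n + m)) (0, 1) K), y * snd (fw (\<lambda>n. v (n + m)) (0, 1) K))"
    using fw_scale[of "\<lambda>n. v (n + m)" y 0 1 K] z unfolding y_def by simp
  have a: "u (m + int K) = 0" using bl[of m] z by (simp add: add.commute)
  have b: "u (m + int K - 1) = \<mu> * y" using bl[of "m - 1"] unfolding y_def by (simp add: algebra_simps)
  from f e a have "y * fst (fw (\<lambda>n. v (n + m)) (0, 1) K) = 0" by simp
  then show f1: "fst (fw (\<lambda>n. v (n + m)) (0, 1) K) = 0" using nz y_def by simp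
  from f e b have "y * snd (fw (\<lambda>n. v (n + m)) (0, 1) K) = \<mu> * y" by simp
  then show f2: "snd (fw (\<lambda>n. v (n + m)) (0, 1) K) = \<mu>" using nz y_def by (simp add: mult.commute)
  show "fst (fw (\<lambda>n. v (n + m)) (1, 0) K) * \<mu> = 1"
    using fw_det[of "\<lambda>n. v (n + m)" K] f1 f2 by simp
qed

lemma fw_Ints:
  assumes "\<And>n. w n \<in> \<int>" "fst x \<in> \<int>" "snd x \<in> \<int>"
  shows "fst (fw w x k) \<in> \<int> \<and> snd (fw w x k) \<in> \<int>"
proof (induction k)
  case 0 then show ?case using assms by simp
next
  case (Suc k)
  have "complex_of_real (w (int k)) \<in> \<int>" using assms(1) by simp
  then show ?case using Suc by (auto intro!: Ints_diff Ints_mult Ints_minus)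
qed

lemma fw_dps:
  assumes len: "length bs = K" and w: "\<And>k. k < K \<Longrightarrow> w (int k) = (if bs ! k then lam else 0)"
  shows "k \<le> K \<Longrightarrow> fw w (0, 1) k = (evalp (fst (dps bs k)) (complex_of_real lam), evalp (snd (dps bs k)) (complex_of_real lam))"
proof (induction k)
  case 0 then show ?case by simp
next
  case (Suc k)
  then have IH: "fw w (0, 1) k = (evalp (fst (dps bs k)) (complex_of_real lam), evalp (snd (dps bs k)) (complex_of_real lam))" by simp
  have wk: "w (int k) = (if bs ! k then lam else 0)" using w Suc.prems by simp
  show ?case
    by (cases "bs ! k") (simp_all add: IH wk pstep_def evalp_padd evalp_neg algebra_simps)
qed

lemma cor_of_rat: "complex_of_real (of_rat r) = of_rat r"
proof (cases r)
  case (Fract a b)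
  then show ?thesis by (simp add: of_rat_rat)
qed

lemma caseb_check:
  fixes lam :: real and w :: "int \<Rightarrow> real"
  assumes K1: "K \<ge> 1" and K8: "K \<le> 8" and lq: "lam \<in> \<rat>" and wv: "\<And>n. w n \<in> {0, lam}"
    and z: "fst (fw w (0, 1) K) = 0"
  shows "snd (fw w (0, 1) K) = 1 \<or> snd (fw w (0, 1) K) = -1"
proof -
  obtain r where r: "lam = of_rat r" using lq by (cases rule: Rats_cases) auto
  define bs where "bs = map (\<lambda>k. w (int k) = lam) [0..<K]"
  have len: "length bs = K" unfolding bs_def by simp
  have wk: "w (int k) = (if bs ! k then lam else 0)" if "k < K" for k
    using that wv[of "int k"] unfolding bs_def by auto
  have f: "fw w (0, 1) K = (evalp (fst (dps bs K)) (complex_of_real lam), evalp (snd (dps bs K)) (complex_of_real lam))"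
    by (rule fw_dps[OF len wk]) auto
  have cl: "complex_of_real lam = of_rat r" unfolding r by (rule cor_of_rat)
  have "of_rat (evalp (fst (dps bs K)) r) = (0::complex)" using z unfolding f cl evalp_of_rat by simp
  then have "evalp (fst (dps bs (length bs))) r = 0" using len by simp
  then have "evalp (snd (dps bs (length bs))) r = 1 \<or> evalp (snd (dps bs (length bs))) r = -1"
    by (rule check_all_sound[rotated 2]) (use len K1 K8 in auto)
  then show ?thesis unfolding f cl evalp_of_rat len by auto
qed

lemma NV:
  fixes v :: "int \<Rightarrow> real" and K :: nat
  assumes K: "K \<ge> 1"
    and cases: "K = 2
             \<or> (K \<le> 8 \<and> (\<exists>lam\<in>\<rat>. \<forall>n. v n \<in> {0, lam}))
             \<or> (\<forall>n. v n \<in> \<int>)"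
    and u: "sol v u" and bl: "\<And>n. u (n + int K) = \<mu> * u n"
    and z: "u m = 0" and nz: "u (m - 1) \<noteq> 0"
  shows "\<mu> = 1 \<or> \<mu> = -1"
proof -
  note c = NV_core[OF u bl z nz]
  from cases consider "K = 2" | "K \<le> 8 \<and> (\<exists>lam\<in>\<rat>. \<forall>n. v n \<in> {0, lam})" | "\<forall>n. v n \<in> \<int>"
    by blast
  then show ?thesis
  proof cases
    case 1
    have "snd (fw (\<lambda>n. v (n + m)) (0, 1) 2) = -1" by (simp add: numeral_2_eq_2)
    then show ?thesis using c(2) 1 by simp
  next
    case 2
    then obtain lam where lam: "lam \<in> \<rat>" "\<And>n. v n \<in> {0, lam}" and K8: "K \<le> 8" by blast
    show ?thesis using caseb_check[OF K K8 lam(1), of "\<lambda>n. v (n + m)"] lam(2) c(1) c(2) by simp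
  next
    case 3
    have i1: "fst (fw (\<lambda>n. v (n + m)) (1, 0) K) \<in> \<int>" using fw_Ints[of "\<lambda>n. v (n + m)" "(1, 0)" K] 3 by simp
    have i2: "\<mu> \<in> \<int>" using fw_Ints[of "\<lambda>n. v (n + m)" "(0, 1)" K] 3 c(2) by simp
    obtain a where a: "fst (fw (\<lambda>n. v (n + m)) (1, 0) K) = of_int a" using i1 Ints_cases by blast
    obtain b where b: "\<mu> = of_int b" using i2 Ints_cases by blast
    have "of_int (a * b) = (1::complex)" using c(3) a b by simp
    then have "a * b = 1" by (metis of_int_eq_1_iff)
    then have "b = 1 \<or> b = -1" using zmult_eq_1_iff[of a b] by auto
    then show ?thesis using b by auto
  qed
qed

lemma eigvec:
  assumes mu: "\<mu>\<^sup>2 - (fst (fw v (1, 0) K) + snd (fw v (0, 1) K)) * \<mu> + 1 = 0"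
  shows "\<exists>w. w \<noteq> (0, 0) \<and> fw v w K = (\<mu> * fst w, \<mu> * snd w)"
proof -
  define a where "a = fst (fw v (1, 0) K)"
  define c where "c = snd (fw v (1, 0) K)"
  define b where "b = fst (fw v (0, 1) K)"
  define d where "d = snd (fw v (0, 1) K)"
  have det: "a * d - c * b = 1" unfolding a_def b_def c_def d_def by (rule fw_det)
  have lin: "fw v (x1, x2) K = (x1 * a + x2 * b, x1 * c + x2 * d)" for x1 x2
    unfolding a_def b_def c_def d_def by (rule fw_linear)
  have m2: "\<mu>\<^sup>2 = (a + d) * \<mu> - 1" using mu unfolding a_def d_def by (simp add: algebra_simps eq_diff_eq)
  show ?thesis
  proof (cases "c \<noteq> 0")
    case True
    have "fw v (\<mu> - d, c) K = (\<mu> * (\<mu> - d), \<mu> * c)"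
      unfolding lin using det m2 by (simp add: algebra_simps power2_eq_square)
    then show ?thesis using True by (intro exI[of _ "(\<mu> - d, c)"]) auto
  next
    case False
    then have c0: "c = 0" by simp
    then have ad: "a * d = 1" using det by simp
    have q: "(\<mu> - a) * (\<mu> - d) = 0" using m2 ad by (simp add: algebra_simps power2_eq_square)
    show ?thesis
    proof (cases "b \<noteq> 0")
      case True
      have "fw v (b, \<mu> - a) K = (\<mu> * b, \<mu> * (\<mu> - a))"
        unfolding lin using c0 q by (simp add: algebra_simps)
      then show ?thesis using True by (intro exI[of _ "(b, \<mu> - a)"]) auto
    next
      case False
      then have b0: "b = 0" by simp
      from q have "\<mu> = a \<or> \<mu> = d" by simp
      then show ?thesis
      proof
        assume "\<mu> = a"
        then have "fw v (1, 0) K = (\<mu> * 1, \<mu> * 0)" using lin[of 1 0] c0 by simp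
        then show ?thesis by (intro exI[of _ "(1, 0)"]) auto
      next
        assume "\<mu> = d"
        then have "fw v (0, 1) K = (\<mu> * 0, \<mu> * 1)" using lin[of 0 1] b0 by simp
        then show ?thesis by (intro exI[of _ "(0, 1)"]) auto
      qed
    qed
  qed
qed

lemma hyp_root:
  fixes t :: real
  assumes "\<bar>t\<bar> > 2"
  shows "\<exists>s. s\<^sup>2 - t * s + 1 = 0 \<and> 0 < \<bar>s\<bar> \<and> \<bar>s\<bar> < 1"
proof -
  have main: "\<exists>s. s\<^sup>2 - t * s + 1 = 0 \<and> 0 < s \<and> s < 1" if t2: "t > 2" for t :: real
  proof -
    define r where "r = sqrt (t\<^sup>2 - 4)"
    have "t * t > 2 * 2" using t2 by (intro mult_strict_mono) auto
    then have tp: "t\<^sup>2 - 4 > 0" by (simp add: power2_eq_square)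
    have r2: "r\<^sup>2 = t\<^sup>2 - 4" unfolding r_def using tp by simp
    have r0: "r > 0" unfolding r_def using tp by simp
    have rt: "r < t" proof -
      have "r\<^sup>2 < t\<^sup>2" using r2 by simp
      then show ?thesis using r0 t2 by (smt (verit) power_mono)
    qed
    have rt2: "t - 2 < r" proof -
      have "(t - 2)\<^sup>2 < r\<^sup>2" using r2 t2 by (simp add: power2_eq_square algebra_simps)
      then show ?thesis using r0 t2 by (smt (verit) power_mono)
    qed
    show ?thesis
      by (rule exI[of _ "(t - r) / 2"]) (use r2 rt rt2 in \<open>auto simp: power2_eq_square field_simps\<close>)
  qed
  show ?thesis
  proof (cases "t > 2")
    case True then show ?thesis using main by force
  next
    case False
    then have "-t > 2" using assms by simp
    from main[OF this] obtain s where "s\<^sup>2 - (-t) * s + 1 = 0" "0 < s" "s < 1" by blast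
    then show ?thesis by (intro exI[of _ "-s"]) (auto simp: power2_eq_square)
  qed
qed

lemma bloch_norm:
  "norm (bloch v K \<mu> w n) = norm \<mu> powi (n div int K) * norm (fst (fw v w (nat (n mod int K))))"
  unfolding bloch_def by (simp add: norm_mult norm_power_int)

lemma bloch_bounds:
  assumes K: "K \<ge> 1" and nz: "\<And>r. r < K \<Longrightarrow> fst (fw v w r) \<noteq> 0"
  shows "\<exists>c C. 0 < c \<and> (\<forall>n. c * norm \<mu> powi (n div int K) \<le> norm (bloch v K \<mu> w n)
                          \<and> norm (bloch v K \<mu> w n) \<le> C * norm \<mu> powi (n div int K))"
proof -
  define f where "f r = norm (fst (fw v w r))" for r
  define c where "c = Min (f ` {..<K})"
  define C where "C = Max (f ` {..<K})"
  have "0 \<in> {..<K}" using K by simp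
  then have ne: "f ` {..<K} \<noteq> {}" by blast
  have cpos: "0 < c" unfolding c_def using nz ne by (subst Min_gr_iff) (auto simp: f_def)
  have b: "c \<le> f r \<and> f r \<le> C" if "r < K" for r
    unfolding c_def C_def using that by auto
  have "c * norm \<mu> powi (n div int K) \<le> norm (bloch v K \<mu> w n)
        \<and> norm (bloch v K \<mu> w n) \<le> C * norm \<mu> powi (n div int K)" for n
  proof -
    define r where "r = nat (n mod int K)"
    have rK: "r < K" unfolding r_def using K by (simp add: nat_less_iff)
    have z: "0 \<le> norm \<mu> powi (n div int K)" by simp
    have "c * norm \<mu> powi (n div int K) \<le> f r * norm \<mu> powi (n div int K)"
      using b[OF rK] z by (intro mult_right_mono) auto
    moreover have "f r * norm \<mu> powi (n div int K) \<le> C * norm \<mu> powi (n div int K)"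
      using b[OF rK] z by (intro mult_right_mono) auto
    ultimately show ?thesis unfolding bloch_norm r_def[symmetric] f_def[symmetric]
      by (simp add: mult.commute)
  qed
  then show ?thesis using cpos by blast
qed

lemma rho_bounds:
  fixes \<rho> :: real
  assumes r0: "0 < \<rho>" and r1: "\<rho> < 1" and K: "K \<ge> 1"
  shows "\<rho> powr real_of_int n \<le> (\<rho> powr real K) powi (n div int K)"
    and "(\<rho> powr real K) powi (n div int K) \<le> \<rho> powr (- real K) * \<rho> powr real_of_int n"
    and "\<rho> powr real K * \<rho> powr (- real_of_int n) \<le> (1 / \<rho> powr real K) powi (n div int K)"
    and "(1 / \<rho> powr real K) powi (n div int K) \<le> \<rho> powr (- real_of_int n)"
proof -
  define q where "q = n div int K"
  have d: "n = int K * q + n mod int K" unfolding q_def by simp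
  have m1: "0 \<le> n mod int K" "n mod int K < int K" using K by simp_all
  have Kq1: "int K * q \<le> n" using d m1 by linarith
  have Kq2: "n < int K * q + int K" using d m1 by linarith
  have Kq1': "real K * real_of_int q \<le> real_of_int n"
    using Kq1 by (simp only: of_int_le_iff[symmetric, where 'a=real]) simp
  have Kq2': "real_of_int n < real K * real_of_int q + real K"
    using Kq2 by (simp only: of_int_less_iff[symmetric, where 'a=real]) simp
  have L: "(\<rho> powr real K) powi q = \<rho> powr (real K * real_of_int q)"
    using r0 by (simp add: powr_powr powr_real_of_int'[symmetric])
  have iv: "1 / \<rho> powr real K = \<rho> powr (- real K)" by (simp add: powr_minus_divide)
  have L': "(1 / \<rho> powr real K) powi q = \<rho> powr (- (real K * real_of_int q))"
    unfolding iv using r0 powr_real_of_int'[of "\<rho> powr (- real K)" q] by (simp add: powr_powr)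
  show "\<rho> powr real_of_int n \<le> (\<rho> powr real K) powi (n div int K)"
    unfolding q_def[symmetric] L using r0 r1 Kq1' by (intro powr_mono') auto
  have "(\<rho> powr real K) powi q \<le> \<rho> powr (real_of_int n - real K)"
    unfolding L using r0 r1 Kq2' by (intro powr_mono') auto
  then show "(\<rho> powr real K) powi (n div int K) \<le> \<rho> powr (- real K) * \<rho> powr real_of_int n"
    unfolding q_def[symmetric] by (simp add: powr_add[symmetric])
  have "\<rho> powr (real K - real_of_int n) \<le> (1 / \<rho> powr real K) powi q"
    unfolding L' using r0 r1 Kq2' by (intro powr_mono') auto
  then show "\<rho> powr real K * \<rho> powr (- real_of_int n) \<le> (1 / \<rho> powr real K) powi (n div int K)"
    unfolding q_def[symmetric] by (simp add: powr_add[symmetric])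
  show "(1 / \<rho> powr real K) powi (n div int K) \<le> \<rho> powr (- real_of_int n)"
    unfolding q_def[symmetric] L' using r0 r1 Kq1' by (intro powr_mono') auto
qed

lemma bloch_nonvanish:
  fixes v :: "int \<Rightarrow> real" and K :: nat
  assumes K: "K \<ge> 1" and per: "\<forall>n. v (n + int K) = v n"
    and cases: "K = 2
             \<or> (K \<le> 8 \<and> (\<exists>lam\<in>\<rat>. \<forall>n. v n \<in> {0, lam}))
             \<or> (\<forall>n. v n \<in> \<int>)"
    and mu: "\<mu> \<noteq> 0" "\<mu> \<noteq> 1" "\<mu> \<noteq> -1"
    and eig: "fw v w K = (\<mu> * fst w, \<mu> * snd w)" and w: "w \<noteq> (0, 0)"
  shows "bloch v K \<mu> w m \<noteq> 0"
proof
  assume z: "bloch v K \<mu> w m = 0"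
  have s: "sol v (bloch v K \<mu> w)" by (rule bloch_sol[OF K per mu(1) eig])
  have bl: "bloch v K \<mu> w (n + int K) = \<mu> * bloch v K \<mu> w n" for n by (rule bloch_shift[OF K mu(1)])
  show False
  proof (cases "bloch v K \<mu> w (m - 1) = 0")
    case True
    have "bloch v K \<mu> w 0 = 0" "bloch v K \<mu> w (-1) = 0"
      using uniq_zero[OF s z True] by auto
    then have "w = (0, 0)" using bloch_init[OF K mu(1) eig] by (cases w) auto
    then show False using w by simp
  next
    case False
    have "\<mu> = 1 \<or> \<mu> = -1" by (rule NV[OF K cases s bl z False])
    then show False using mu by simp
  qed
qed

lemma cor_eq_m1: "complex_of_real x = -1 \<longleftrightarrow> x = -1"
  by (metis of_real_eq_iff of_real_minus of_real_1)

lemma hyp_setup: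
  fixes v :: "int \<Rightarrow> real" and K :: nat
  assumes K: "K \<ge> 1" and per: "\<forall>n. v (n + int K) = v n"
    and cases: "K = 2
             \<or> (K \<le> 8 \<and> (\<exists>lam\<in>\<rat>. \<forall>n. v n \<in> {0, lam}))
             \<or> (\<forall>n. v n \<in> \<int>)"
    and t: "\<bar>trace (monodromy v K)\<bar> > 2"
  shows "\<exists>\<phi>u \<phi>s \<rho> c C. sol v \<phi>u \<and> sol v \<phi>s \<and> wr \<phi>u \<phi>s 0 \<noteq> 0 \<and> 0 < \<rho> \<and> \<rho> < 1 \<and> 0 < c \<and>
     (\<forall>n. c * \<rho> powr real_of_int n \<le> norm (\<phi>s n) \<and> norm (\<phi>s n) \<le> C * \<rho> powr real_of_int n \<and>
          c * \<rho> powr (- real_of_int n) \<le> norm (\<phi>u n) \<and> norm (\<phi>u n) \<le> C * \<rho> powr (- real_of_int n))"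
proof -
  define tr where "tr = trace (monodromy v K)"
  obtain s where s: "s\<^sup>2 - tr * s + 1 = 0" "0 < \<bar>s\<bar>" "\<bar>s\<bar> < 1" using hyp_root[of tr] t tr_def by blast
  have s0: "s \<noteq> 0" using s by simp
  define \<mu>s where "\<mu>s = complex_of_real s"
  define \<mu>u where "\<mu>u = complex_of_real (1 / s)"
  have trc: "fst (fw v (1, 0) K) + snd (fw v (0, 1) K) = complex_of_real tr"
    unfolding tr_def by (rule trace_monodromy[symmetric])
  have chs: "\<mu>s\<^sup>2 - (fst (fw v (1, 0) K) + snd (fw v (0, 1) K)) * \<mu>s + 1 = 0"
    unfolding trc \<mu>s_def using arg_cong[OF s(1), of complex_of_real] by simp
  have "(1 / s)\<^sup>2 - tr * (1 / s) + 1 = (s\<^sup>2 - tr * s + 1) / s\<^sup>2"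
    using s0 by (simp add: field_simps power2_eq_square)
  then have "(1 / s)\<^sup>2 - tr * (1 / s) + 1 = 0" using s(1) by simp
  then have "complex_of_real ((1 / s)\<^sup>2 - tr * (1 / s) + 1) = 0" by simp
  then have chu: "\<mu>u\<^sup>2 - (fst (fw v (1, 0) K) + snd (fw v (0, 1) K)) * \<mu>u + 1 = 0"
    unfolding trc \<mu>u_def by (simp only: of_real_add of_real_diff of_real_mult of_real_power of_real_1)
  obtain ws where ws: "ws \<noteq> (0, 0)" "fw v ws K = (\<mu>s * fst ws, \<mu>s * snd ws)" using eigvec[OF chs] by blast
  obtain wu where wu: "wu \<noteq> (0, 0)" "fw v wu K = (\<mu>u * fst wu, \<mu>u * snd wu)" using eigvec[OF chu] by blast
  have s1: "s \<noteq> 1" "s \<noteq> -1" using s by auto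
  have u1: "1 / s \<noteq> 1" "1 / s \<noteq> -1" using s s0 by (auto simp: field_simps)
  have mus: "\<mu>s \<noteq> 0" "\<mu>s \<noteq> 1" "\<mu>s \<noteq> -1" unfolding \<mu>s_def using s0 s1 by (auto simp: cor_eq_m1)
  have muu: "\<mu>u \<noteq> 0" "\<mu>u \<noteq> 1" "\<mu>u \<noteq> -1" unfolding \<mu>u_def using s0 u1
    by (auto simp del: of_real_divide simp: of_real_eq_1_iff cor_eq_m1)
  define \<phi>s where "\<phi>s = bloch v K \<mu>s ws"
  define \<phi>u where "\<phi>u = bloch v K \<mu>u wu"
  have sols: "sol v \<phi>s" unfolding \<phi>s_def by (rule bloch_sol[OF K per mus(1) ws(2)])
  have solu: "sol v \<phi>u" unfolding \<phi>u_def by (rule bloch_sol[OF K per muu(1) wu(2)])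
  have nvs: "\<phi>s m \<noteq> 0" for m unfolding \<phi>s_def by (rule bloch_nonvanish[OF K per cases mus ws(2) ws(1)])
  have nvu: "\<phi>u m \<noteq> 0" for m unfolding \<phi>u_def by (rule bloch_nonvanish[OF K per cases muu wu(2) wu(1)])
  have fws: "fst (fw v ws r) \<noteq> 0" if "r < K" for r
  proof -
    have "\<phi>s (int r) = fst (fw v ws r)" unfolding \<phi>s_def bloch_def using that by simp
    then show ?thesis using nvs[of "int r"] by simp
  qed
  have fwu: "fst (fw v wu r) \<noteq> 0" if "r < K" for r
  proof -
    have "\<phi>u (int r) = fst (fw v wu r)" unfolding \<phi>u_def bloch_def using that by simp
    then show ?thesis using nvu[of "int r"] by simp
  qed
  have W: "wr \<phi>u \<phi>s 0 \<noteq> 0"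
  proof
    assume W0: "wr \<phi>u \<phi>s 0 = 0"
    have "wr \<phi>u \<phi>s (-1) = 0" using W0 wr_const[OF solu sols, of "-1" 0] by simp
    moreover have "\<phi>u 0 = fst wu" "\<phi>u (-1) = snd wu" unfolding \<phi>u_def using bloch_init[OF K muu(1) wu(2)] by auto
    moreover have "\<phi>s 0 = fst ws" "\<phi>s (-1) = snd ws" unfolding \<phi>s_def using bloch_init[OF K mus(1) ws(2)] by auto
    ultimately have d: "snd wu * fst ws - fst wu * snd ws = 0" unfolding wr_def by simp
    have wu1: "fst wu \<noteq> 0" using nvu[of 0] \<open>\<phi>u 0 = fst wu\<close> by simp
    define \<kappa> where "\<kappa> = fst ws / fst wu"
    have wsk: "ws = (\<kappa> * fst wu, \<kappa> * snd wu)"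
      unfolding \<kappa>_def using wu1 d by (cases ws) (auto simp: field_simps)
    have "fw v ws K = (\<kappa> * fst (fw v wu K), \<kappa> * snd (fw v wu K))"
      by (subst wsk, subst fw_scale) (simp add: prod_eq_iff)
    also have "\<dots> = (\<mu>u * fst ws, \<mu>u * snd ws)" using wu(2) wsk by (simp add: algebra_simps)
    finally have "(\<mu>s * fst ws, \<mu>s * snd ws) = (\<mu>u * fst ws, \<mu>u * snd ws)" using ws(2) by simp
    then have "(\<mu>s - \<mu>u) * fst ws = 0" "(\<mu>s - \<mu>u) * snd ws = 0" by (auto simp: algebra_simps)
    moreover have "\<mu>s \<noteq> \<mu>u"
    proof
      assume "\<mu>s = \<mu>u"
      then have "s = 1 / s" unfolding \<mu>s_def \<mu>u_def by (simp del: of_real_divide)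
      then have "s * s = 1" using s0 by (simp add: field_simps)
      then have "\<bar>s\<bar> * \<bar>s\<bar> = 1" by (simp add: abs_mult[symmetric])
      moreover have "\<bar>s\<bar> * \<bar>s\<bar> < 1 * 1" using s by (intro mult_strict_mono) auto
      ultimately show False by simp
    qed
    ultimately have "ws = (0, 0)" by (cases ws) auto
    then show False using ws(1) by simp
  qed
  define \<rho> where "\<rho> = \<bar>s\<bar> powr (1 / real K)"
  have r0: "0 < \<rho>" unfolding \<rho>_def using s by simp
  have "\<bar>s\<bar> powr (1 / real K) < 1 powr (1 / real K)"
    by (rule powr_less_mono2) (use s K in auto)
  then have r1: "\<rho> < 1" unfolding \<rho>_def by simp
  have rK: "\<rho> powr real K = \<bar>s\<bar>" unfolding \<rho>_def using K s by (simp add: powr_powr)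
  have nms: "norm \<mu>s = \<rho> powr real K" unfolding \<mu>s_def rK by simp
  have nmu: "norm \<mu>u = 1 / \<rho> powr real K" unfolding \<mu>u_def rK
    by (simp del: of_real_divide add: abs_divide)
  obtain cs Cs where cs: "0 < cs" "\<And>n. cs * norm \<mu>s powi (n div int K) \<le> norm (\<phi>s n)"
      "\<And>n. norm (\<phi>s n) \<le> Cs * norm \<mu>s powi (n div int K)"
    using bloch_bounds[OF K fws, of \<mu>s] unfolding \<phi>s_def by blast
  obtain cu Cu where cu: "0 < cu" "\<And>n. cu * norm \<mu>u powi (n div int K) \<le> norm (\<phi>u n)"
      "\<And>n. norm (\<phi>u n) \<le> Cu * norm \<mu>u powi (n div int K)"
    using bloch_bounds[OF K fwu, of \<mu>u] unfolding \<phi>u_def by blast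
  have Cs0: "Cs \<ge> 0" using cs(3)[of 0] cs(1) cs(2)[of 0] by simp
  have Cu0: "Cu \<ge> 0" using cu(3)[of 0] cu(1) cu(2)[of 0] by simp
  define c where "c = min cs (cu * \<rho> powr real K)"
  define C where "C = max (Cs * \<rho> powr (- real K)) Cu"
  have c0: "0 < c" unfolding c_def using cs cu r0 by simp
  have bnd: "c * \<rho> powr real_of_int n \<le> norm (\<phi>s n) \<and> norm (\<phi>s n) \<le> C * \<rho> powr real_of_int n \<and>
          c * \<rho> powr (- real_of_int n) \<le> norm (\<phi>u n) \<and> norm (\<phi>u n) \<le> C * \<rho> powr (- real_of_int n)" for n
  proof (intro conjI)
    note rb = rho_bounds[OF r0 r1 K, of n]
    have "c * \<rho> powr real_of_int n \<le> cs * \<rho> powr real_of_int n" unfolding c_def by (intro mult_right_mono) auto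
    also have "\<dots> \<le> cs * norm \<mu>s powi (n div int K)" unfolding nms using rb(1) cs(1) by (intro mult_left_mono) auto
    also have "\<dots> \<le> norm (\<phi>s n)" by (rule cs(2))
    finally show "c * \<rho> powr real_of_int n \<le> norm (\<phi>s n)" .
    have "norm (\<phi>s n) \<le> Cs * norm \<mu>s powi (n div int K)" by (rule cs(3))
    also have "\<dots> \<le> Cs * (\<rho> powr (- real K) * \<rho> powr real_of_int n)" unfolding nms using rb(2) Cs0 by (intro mult_left_mono) auto
    also have "\<dots> \<le> C * \<rho> powr real_of_int n" unfolding C_def by (simp add: mult.assoc[symmetric] mult_right_mono)
    finally show "norm (\<phi>s n) \<le> C * \<rho> powr real_of_int n" .
    have "c * \<rho> powr (- real_of_int n) \<le> (cu * \<rho> powr real K) * \<rho> powr (- real_of_int n)" unfolding c_def by (intro mult_right_mono) auto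
    also have "\<dots> = cu * (\<rho> powr real K * \<rho> powr (- real_of_int n))" by simp
    also have "\<dots> \<le> cu * norm \<mu>u powi (n div int K)" unfolding nmu using rb(3) cu(1) by (intro mult_left_mono) auto
    also have "\<dots> \<le> norm (\<phi>u n)" by (rule cu(2))
    finally show "c * \<rho> powr (- real_of_int n) \<le> norm (\<phi>u n)" .
    have "norm (\<phi>u n) \<le> Cu * norm \<mu>u powi (n div int K)" by (rule cu(3))
    also have "\<dots> \<le> Cu * \<rho> powr (- real_of_int n)" unfolding nmu using rb(4) Cu0 by (intro mult_left_mono) auto
    also have "\<dots> \<le> C * \<rho> powr (- real_of_int n)" unfolding C_def by (intro mult_right_mono) auto
    finally show "norm (\<phi>u n) \<le> C * \<rho> powr (- real_of_int n)" .
  qed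
  show ?thesis using solu sols W r0 r1 c0 bnd by blast
qed

locale hyp =
  fixes v :: "int \<Rightarrow> real" and \<phi>u \<phi>s :: "int \<Rightarrow> complex" and \<rho> c C :: real
  assumes sol_u: "sol v \<phi>u" and sol_s: "sol v \<phi>s" and W0: "wr \<phi>u \<phi>s 0 \<noteq> 0"
    and r0: "0 < \<rho>" and r1: "\<rho> < 1" and c0: "0 < c"
    and bnd: "\<And>n. c * \<rho> powr real_of_int n \<le> norm (\<phi>s n) \<and> norm (\<phi>s n) \<le> C * \<rho> powr real_of_int n \<and>
          c * \<rho> powr (- real_of_int n) \<le> norm (\<phi>u n) \<and> norm (\<phi>u n) \<le> C * \<rho> powr (- real_of_int n)"
begin

definition r :: "int \<Rightarrow> real" where "r e = \<rho> powr real_of_int e"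

lemma r_pos [simp]: "r e > 0" using r0 by (simp add: r_def)
lemma r_nn [simp]: "r e \<ge> 0" using r0 by (simp add: r_def)
lemma rp_pos [simp]: "0 < \<rho> powr x" using r0 by simp
lemma rp_nn [simp]: "0 \<le> \<rho> powr x" using r0 by simp

lemma r_mult: "r a * r b = r (a + b)"
  by (simp add: powr_add[symmetric] r_def)

lemma r_div: "r a / r b = r (a - b)"
  by (simp add: powr_diff r_def)

lemma r_mono: "a \<le> b \<Longrightarrow> r b \<le> r a"
  unfolding r_def using r0 r1 by (intro powr_mono') auto

definition W where "W = wr \<phi>u \<phi>s 0"

lemma cC: "c \<le> C"
proof -
  have "c * r 0 \<le> norm (\<phi>s 0)" "norm (\<phi>s 0) \<le> C * r 0" using bnd[of 0] by (auto simp: r_def)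
  then show ?thesis using r0 by (simp add: r_def)
qed

lemma C0: "0 < C" using cC c0 by simp

lemma phs_up: "norm (\<phi>s n) \<le> C * r n" using bnd[of n] by (auto simp: r_def)
lemma phs_lo: "c * r n \<le> norm (\<phi>s n)" using bnd[of n] by (auto simp: r_def)
lemma phu_up: "norm (\<phi>u n) \<le> C * r (- n)" using bnd[of n] by (auto simp: r_def)
lemma phu_lo: "c * r (- n) \<le> norm (\<phi>u n)" using bnd[of n] by (auto simp: r_def)

lemma phs_nz: "\<phi>s n \<noteq> 0"
proof
  assume "\<phi>s n = 0" then have "c * r n \<le> 0" using phs_lo[of n] by simp
  moreover have "0 < c * r n" using c0 by simp
  ultimately show False by simp
qed
lemma phu_nz: "\<phi>u n \<noteq> 0"
proof
  assume "\<phi>u n = 0" then have "c * r (- n) \<le> 0" using phu_lo[of n] by simp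
  moreover have "0 < c * r (- n)" using c0 by simp
  ultimately show False by simp
qed

definition G where "G = green \<phi>u \<phi>s"

definition C1 where "C1 = C * C / norm W"

lemma W_nz: "W \<noteq> 0" using W0 W_def by simp

lemma G_bound: "norm (G i j) \<le> C1 * r \<bar>i - j\<bar>"
proof -
  have "norm (G i j) = norm (\<phi>u (min i j)) * norm (\<phi>s (max i j)) / norm W"
    unfolding G_def green_def W_def by (simp add: norm_mult norm_divide)
  also have "\<dots> \<le> (C * r (- min i j)) * (C * r (max i j)) / norm W"
    using phu_up phs_up W_nz C0 by (intro divide_right_mono mult_mono) auto
  also have "(C * r (- min i j)) * (C * r (max i j)) = C * C * (r (- min i j) * r (max i j))"
    by simp
  also have "r (- min i j) * r (max i j) = r (- min i j + max i j)" by (rule r_mult)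
  also have "- min i j + max i j = \<bar>i - j\<bar>" by auto
  finally show ?thesis unfolding C1_def by simp
qed

definition aL :: "nat \<Rightarrow> complex" where "aL n = - \<phi>u (- int n - 1) / \<phi>s (- int n - 1)"
definition bR :: "nat \<Rightarrow> complex" where "bR n = - \<phi>s (int n + 1) / \<phi>u (int n + 1)"

definition A0 where "A0 = C / c"

lemma aL_bound: "norm (aL n) \<le> A0 * r (2 * int n + 2)"
proof -
  have e: "- (- int n - 1) = int n + 1" by simp
  have u: "norm (\<phi>u (- int n - 1)) \<le> C * r (int n + 1)" using phu_up[of "- int n - 1"] unfolding e .
  have l: "c * r (- int n - 1) \<le> norm (\<phi>s (- int n - 1))" using phs_lo[of "- int n - 1"] by simp
  have "norm (aL n) = norm (\<phi>u (- int n - 1)) / norm (\<phi>s (- int n - 1))"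
    unfolding aL_def by (simp add: norm_divide)
  also have "\<dots> \<le> (C * r (int n + 1)) / (c * r (- int n - 1))"
    by (rule frac_le[OF _ u _ l]) (use C0 c0 r_pos in auto)
  also have "\<dots> = A0 * (r (int n + 1) / r (- int n - 1))" unfolding A0_def by simp
  also have "r (int n + 1) / r (- int n - 1) = r (2 * int n + 2)"
    by (simp add: r_div)
  finally show ?thesis .
qed

lemma bR_bound: "norm (bR n) \<le> A0 * r (2 * int n + 2)"
proof -
  have u: "norm (\<phi>s (int n + 1)) \<le> C * r (int n + 1)" using phs_up[of "int n + 1"] by simp
  have l: "c * r (- int n - 1) \<le> norm (\<phi>u (int n + 1))" using phu_lo[of "int n + 1"] by simp
  have "norm (bR n) = norm (\<phi>s (int n + 1)) / norm (\<phi>u (int n + 1))"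
    unfolding bR_def by (simp add: norm_divide)
  also have "\<dots> \<le> (C * r (int n + 1)) / (c * r (- int n - 1))"
    by (rule frac_le[OF _ u _ l]) (use C0 c0 r_pos in auto)
  also have "\<dots> = A0 * (r (int n + 1) / r (- int n - 1))" unfolding A0_def by simp
  also have "r (int n + 1) / r (- int n - 1) = r (2 * int n + 2)"
    by (simp add: r_div)
  finally show ?thesis .
qed

end

lemma norm3: "norm (a::complex) \<le> A \<Longrightarrow> norm b \<le> B \<Longrightarrow> norm d \<le> D \<Longrightarrow> norm (a * b * d) \<le> A * B * D"
proof -
  assume h: "norm a \<le> A" "norm b \<le> B" "norm d \<le> D"
  have "norm a * norm b \<le> A * B" using h by (intro mult_mono) (auto intro: order_trans[OF norm_ge_zero])
  then have "norm a * norm b * norm d \<le> A * B * D" using h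
    by (intro mult_mono) (auto intro: order_trans[OF norm_ge_zero] mult_nonneg_nonneg)
  then show ?thesis by (simp add: norm_mult)
qed

lemma norm4: "norm (a::complex) \<le> A \<Longrightarrow> norm b \<le> B \<Longrightarrow> norm d \<le> D \<Longrightarrow> norm e \<le> E
   \<Longrightarrow> norm (a * b * d * e) \<le> A * B * D * E"
proof -
  assume h: "norm a \<le> A" "norm b \<le> B" "norm d \<le> D" "norm e \<le> E"
  have "norm (a * b * d) \<le> A * B * D" by (rule norm3[OF h(1-3)])
  then have "norm (a * b * d) * norm e \<le> A * B * D * E" using h
    by (intro mult_mono) (auto intro: order_trans[OF norm_ge_zero])
  then show ?thesis by (simp add: norm_mult)
qed

context hyp
begin

definition psiL :: "nat \<Rightarrow> int \<Rightarrow> complex" where "psiL n k = \<phi>u k + aL n * \<phi>s k"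
definition psiR :: "nat \<Rightarrow> int \<Rightarrow> complex" where "psiR n k = \<phi>s k + bR n * \<phi>u k"
definition Gs :: "nat \<Rightarrow> int \<Rightarrow> int \<Rightarrow> complex" where "Gs n = green (psiL n) (psiR n)"

lemma sol_psiL: "sol v (psiL n)"
  using sol_lin[OF sol_u sol_s, of 1 "aL n"] unfolding psiL_def[abs_def] by simp

lemma sol_psiR: "sol v (psiR n)"
  using sol_lin[OF sol_s sol_u, of 1 "bR n"] unfolding psiR_def[abs_def] by simp

lemma psiL_bd: "psiL n (- int n - 1) = 0"
  unfolding psiL_def aL_def using phs_nz[of "- int n - 1"] by simp

lemma psiR_bd: "psiR n (int n + 1) = 0"
  unfolding psiR_def bR_def using phu_nz[of "int n + 1"] by simp

lemma wr_psi: "wr (psiL n) (psiR n) 0 = (1 - aL n * bR n) * W"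
proof -
  have "wr (psiL n) (psiR n) 0 = wr (\<lambda>k. 1 * \<phi>u k + aL n * \<phi>s k) (\<lambda>k. bR n * \<phi>u k + 1 * \<phi>s k) 0"
    unfolding psiL_def psiR_def by (simp add: add.commute)
  also have "\<dots> = (1 - aL n * bR n) * W" unfolding wr_lin W_def by simp
  finally show ?thesis .
qed

definition N0 :: nat where "N0 = (SOME N. \<forall>n\<ge>N. A0 * A0 * \<rho> ^ n \<le> 1 / 2)"

lemma N0: "n \<ge> N0 \<Longrightarrow> A0 * A0 * \<rho> ^ n \<le> 1 / 2"
proof -
  have "(\<lambda>n. \<rho> ^ n) \<longlonglongrightarrow> 0" using r0 r1 by (intro LIMSEQ_power_zero) auto
  then have "(\<lambda>n. A0 * A0 * \<rho> ^ n) \<longlonglongrightarrow> A0 * A0 * 0" by (intro tendsto_mult tendsto_const)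
  then have "eventually (\<lambda>n. A0 * A0 * \<rho> ^ n < 1 / 2) sequentially"
    by (intro order_tendstoD(2)) auto
  then have "\<exists>N. \<forall>n\<ge>N. A0 * A0 * \<rho> ^ n \<le> 1 / 2" unfolding eventually_sequentially
    by (meson less_imp_le)
  then have "\<forall>n\<ge>N0. A0 * A0 * \<rho> ^ n \<le> 1 / 2" unfolding N0_def by (rule someI_ex)
  then show "n \<ge> N0 \<Longrightarrow> A0 * A0 * \<rho> ^ n \<le> 1 / 2" by blast
qed

lemma r_nat: "r (int n) = \<rho> ^ n" unfolding r_def using r0 by (simp add: powr_realpow)

lemma A00: "0 \<le> A0" unfolding A0_def using C0 c0 by simp

lemma ab_small: assumes "n \<ge> N0" shows "norm (aL n * bR n) \<le> 1 / 2"
proof -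
  have "norm (aL n * bR n) \<le> (A0 * r (2 * int n + 2)) * (A0 * r (2 * int n + 2))"
    unfolding norm_mult using aL_bound bR_bound by (intro mult_mono) (auto intro: order_trans[OF norm_ge_zero])
  also have "\<dots> = A0 * A0 * (r (2 * int n + 2) * r (2 * int n + 2))" by (simp add: algebra_simps)
  also have "\<dots> = A0 * A0 * r (4 * int n + 4)" unfolding r_mult by simp
  also have "\<dots> \<le> A0 * A0 * r (int n)" using A00 by (intro mult_left_mono r_mono) auto
  also have "\<dots> \<le> 1 / 2" unfolding r_nat using N0[OF assms] .
  finally show ?thesis .
qed

lemma one_minus_ab: assumes "n \<ge> N0" shows "norm (1 - aL n * bR n) \<ge> 1 / 2"
proof -
  have "1 \<le> norm (1 - aL n * bR n) + norm (aL n * bR n)"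
    using norm_triangle_ineq[of "1 - aL n * bR n" "aL n * bR n"] by simp
  then show ?thesis using ab_small[OF assms] by simp
qed

lemma Wn_nz: assumes "n \<ge> N0" shows "wr (psiL n) (psiR n) 0 \<noteq> 0"
proof -
  have "1 - aL n * bR n \<noteq> 0" using one_minus_ab[OF assms] by auto
  then show ?thesis unfolding wr_psi using W_nz by simp
qed

lemma Gs_id: assumes "n \<ge> N0"
  shows "Gs n (i + 1) j + Gs n (i - 1) j + complex_of_real (v i) * Gs n i j = (if i = j then 1 else 0)"
  unfolding Gs_def by (rule green_id[OF sol_psiL sol_psiR Wn_nz[OF assms]])

lemma Gs_id2: assumes "n \<ge> N0"
  shows "Gs n i (j + 1) + Gs n i (j - 1) + complex_of_real (v j) * Gs n i j = (if i = j then 1 else 0)"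
  unfolding Gs_def by (rule green_id2[OF sol_psiL sol_psiR Wn_nz[OF assms]])

lemma Gs_right0: "j \<le> int n + 1 \<Longrightarrow> Gs n (int n + 1) j = 0"
  unfolding Gs_def green_def using psiR_bd by (simp add: max_def)

lemma Gs_left0: "j \<ge> - int n - 1 \<Longrightarrow> Gs n (- int n - 1) j = 0"
  unfolding Gs_def green_def using psiL_bd by (simp add: min_def)

lemma Gs_sym: "Gs n i j = Gs n j i" unfolding Gs_def by (rule green_sym)

end

context hyp
begin

definition M :: "nat \<Rightarrow> int \<Rightarrow> int \<Rightarrow> int" where
  "M n i j = max \<bar>i - j\<bar> (max (int n - \<bar>i\<bar>) (int n - \<bar>j\<bar>))"

definition D :: "nat \<Rightarrow> int \<Rightarrow> int \<Rightarrow> complex" where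
  "D n i j = (if i \<in> sec n \<and> j \<in> sec n then Gs n i j else 0) - G i j"

definition C2 where "C2 = (2 / norm W) * (2 * A0 * C * C + 2 * A0 * A0 * C * C)"
definition C3 where "C3 = C1 + C2"

lemma M_sym: "M n i j = M n j i" unfolding M_def by (simp add: abs_minus_commute max.commute max.left_commute)

lemma diff_in:
  assumes n: "n \<ge> N0" and pq: "- int n \<le> p" "p \<le> q" "q \<le> int n"
  shows "norm (Gs n p q - G p q) \<le> C2 * r (M n p q)"
proof -
  define a where "a = aL n"
  define b where "b = bR n"
  have Wn: "wr (psiL n) (psiR n) 0 = (1 - a * b) * W" unfolding a_def b_def by (rule wr_psi)
  have oab: "norm (1 - a * b) \<ge> 1 / 2" unfolding a_def b_def by (rule one_minus_ab[OF n])
  have oab0: "1 - a * b \<noteq> 0" using oab by auto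
  have Wz: "W \<noteq> 0" by (rule W_nz)
  define num where "num = b * \<phi>u p * \<phi>u q + a * \<phi>s p * \<phi>s q + a * b * \<phi>s p * \<phi>u q + a * b * \<phi>u p * \<phi>s q"
  have numeq: "num = psiL n p * psiR n q - (1 - a * b) * (\<phi>u p * \<phi>s q)"
    unfolding num_def psiL_def psiR_def a_def b_def by (simp add: algebra_simps)
  have Gse: "Gs n p q = psiL n p * psiR n q / ((1 - a * b) * W)"
    unfolding Gs_def green_def Wn using pq by simp
  have Ge: "G p q = \<phi>u p * \<phi>s q / W"
    unfolding G_def green_def W_def using pq by simp
  have "Gs n p q - G p q = num / ((1 - a * b) * W)"
    unfolding Gse Ge numeq using oab0 Wz by (simp add: field_simps)
  then have "norm (Gs n p q - G p q) = norm num / (norm (1 - a * b) * norm W)"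
    by (simp add: norm_divide norm_mult)
  also have "\<dots> \<le> norm num / ((1 / 2) * norm W)"
  proof (rule divide_left_mono)
    have "0 < norm (1 - a * b)" "0 < norm W" using oab Wz by auto
    then show "0 < norm (1 - a * b) * norm W * ((1 / 2) * norm W)" by simp
    show "(1 / 2) * norm W \<le> norm (1 - a * b) * norm W" using oab by (intro mult_right_mono) auto
  qed simp
  also have "\<dots> = (2 / norm W) * norm num" by simp
  finally have step1: "norm (Gs n p q - G p q) \<le> (2 / norm W) * norm num" .
  define E where "E = A0 * r (2 * int n + 2)"
  have aE: "norm a \<le> E" unfolding a_def E_def by (rule aL_bound)
  have bE: "norm b \<le> E" unfolding b_def E_def by (rule bR_bound)
  have m1: "M n p q \<le> 2 * int n + 2 - p - q" "M n p q \<le> 2 * int n + 2 + p + q"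
    "M n p q \<le> 4 * int n + 4 + p - q" "M n p q \<le> 4 * int n + 4 - p + q"
    unfolding M_def using pq by auto
  have A0C: "0 \<le> A0 * C * C" using A00 C0 by simp
  have A0C2: "0 \<le> A0 * A0 * C * C" using A00 C0 by simp
  have t1: "norm (b * \<phi>u p * \<phi>u q) \<le> A0 * C * C * r (M n p q)"
  proof -
    have "norm (b * \<phi>u p * \<phi>u q) \<le> E * (C * r (- p)) * (C * r (- q))"
      by (rule norm3[OF bE phu_up phu_up])
    also have "\<dots> = A0 * C * C * (r (2 * int n + 2) * r (- p) * r (- q))" unfolding E_def by (simp add: algebra_simps)
    also have "r (2 * int n + 2) * r (- p) * r (- q) = r (2 * int n + 2 - p - q)" by (simp add: r_mult)
    also have "A0 * C * C * \<dots> \<le> A0 * C * C * r (M n p q)" using A0C m1 by (intro mult_left_mono r_mono) auto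
    finally show ?thesis .
  qed
  have t2: "norm (a * \<phi>s p * \<phi>s q) \<le> A0 * C * C * r (M n p q)"
  proof -
    have "norm (a * \<phi>s p * \<phi>s q) \<le> E * (C * r p) * (C * r q)"
      by (rule norm3[OF aE phs_up phs_up])
    also have "\<dots> = A0 * C * C * (r (2 * int n + 2) * r p * r q)" unfolding E_def by (simp add: algebra_simps)
    also have "r (2 * int n + 2) * r p * r q = r (2 * int n + 2 + p + q)" by (simp add: r_mult)
    also have "A0 * C * C * \<dots> \<le> A0 * C * C * r (M n p q)" using A0C m1 by (intro mult_left_mono r_mono) auto
    finally show ?thesis .
  qed
  have t3: "norm (a * b * \<phi>s p * \<phi>u q) \<le> A0 * A0 * C * C * r (M n p q)"
  proof -
    have "norm (a * b * \<phi>s p * \<phi>u q) \<le> E * E * (C * r p) * (C * r (- q))"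
      by (rule norm4[OF aE bE phs_up phu_up])
    also have "\<dots> = A0 * A0 * C * C * (r (2 * int n + 2) * r (2 * int n + 2) * r p * r (- q))" unfolding E_def by (simp add: algebra_simps)
    also have "r (2 * int n + 2) * r (2 * int n + 2) * r p * r (- q) = r (4 * int n + 4 + p - q)" by (simp add: r_mult)
    also have "A0 * A0 * C * C * \<dots> \<le> A0 * A0 * C * C * r (M n p q)" using A0C2 m1 by (intro mult_left_mono r_mono) auto
    finally show ?thesis .
  qed
  have t4: "norm (a * b * \<phi>u p * \<phi>s q) \<le> A0 * A0 * C * C * r (M n p q)"
  proof -
    have "norm (a * b * \<phi>u p * \<phi>s q) \<le> E * E * (C * r (- p)) * (C * r q)"
      by (rule norm4[OF aE bE phu_up phs_up])
    also have "\<dots> = A0 * A0 * C * C * (r (2 * int n + 2) * r (2 * int n + 2) * r (- p) * r q)" unfolding E_def by (simp add: algebra_simps)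
    also have "r (2 * int n + 2) * r (2 * int n + 2) * r (- p) * r q = r (4 * int n + 4 - p + q)" by (simp add: r_mult)
    also have "A0 * A0 * C * C * \<dots> \<le> A0 * A0 * C * C * r (M n p q)" using A0C2 m1 by (intro mult_left_mono r_mono) auto
    finally show ?thesis .
  qed
  have "norm num \<le> norm (b * \<phi>u p * \<phi>u q) + norm (a * \<phi>s p * \<phi>s q) + norm (a * b * \<phi>s p * \<phi>u q) + norm (a * b * \<phi>u p * \<phi>s q)"
    unfolding num_def by (intro norm_triangle_le add_mono order_refl norm_triangle_ineq)
  also have "\<dots> \<le> (2 * A0 * C * C + 2 * A0 * A0 * C * C) * r (M n p q)"
    using t1 t2 t3 t4 by (simp add: algebra_simps)
  finally have "norm num \<le> (2 * A0 * C * C + 2 * A0 * A0 * C * C) * r (M n p q)" .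
  then have "(2 / norm W) * norm num \<le> (2 / norm W) * ((2 * A0 * C * C + 2 * A0 * A0 * C * C) * r (M n p q))"
    by (intro mult_left_mono) auto
  also have "(2 / norm W) * ((2 * A0 * C * C + 2 * A0 * A0 * C * C) * r (M n p q)) = C2 * r (M n p q)"
    unfolding C2_def by (simp only: mult.assoc)
  finally show ?thesis using step1 by linarith
qed

lemma C1_nn: "0 \<le> C1" unfolding C1_def by simp
lemma C2_nn: "0 \<le> C2" unfolding C2_def using A00 C0 by simp

lemma D_bound: assumes n: "n \<ge> N0" shows "norm (D n i j) \<le> C3 * r (M n i j)"
proof (cases "i \<in> sec n \<and> j \<in> sec n")
  case True
  then have ij: "- int n \<le> i" "i \<le> int n" "- int n \<le> j" "j \<le> int n" unfolding sec_def by auto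
  have "norm (Gs n i j - G i j) \<le> C2 * r (M n i j)"
  proof (cases "i \<le> j")
    case True then show ?thesis using diff_in[OF n] ij by auto
  next
    case False
    then have "norm (Gs n j i - G j i) \<le> C2 * r (M n j i)" using diff_in[OF n] ij by auto
    then show ?thesis by (simp add: Gs_sym[of n j i] G_def green_sym[of _ _ j i] M_sym[of n j i])
  qed
  also have "\<dots> \<le> C3 * r (M n i j)" unfolding C3_def using C1_nn by (intro mult_right_mono) auto
  finally show ?thesis unfolding D_def using True by simp
next
  case False
  then have "\<bar>i\<bar> > int n \<or> \<bar>j\<bar> > int n" unfolding sec_def by auto
  then have "M n i j \<le> \<bar>i - j\<bar>" unfolding M_def by auto
  have "D n i j = - G i j" unfolding D_def using False by auto
  then have "norm (D n i j) = norm (G i j)" by simp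
  also have "\<dots> \<le> C1 * r \<bar>i - j\<bar>" by (rule G_bound)
  also have "\<dots> \<le> C3 * r (M n i j)" unfolding C3_def using C1_nn C2_nn \<open>M n i j \<le> \<bar>i - j\<bar>\<close>
    by (intro mult_mono r_mono) auto
  finally show ?thesis .
qed

end

lemma geom_int_summable:
  fixes \<sigma> :: real
  assumes s0: "0 < \<sigma>" and s1: "\<sigma> < 1"
  shows "(\<lambda>k::int. \<sigma> powr real_of_int \<bar>k\<bar>) summable_on UNIV"
proof -
  define f where "f k = \<sigma> powr real_of_int \<bar>k\<bar>" for k :: int
  have g: "summable (\<lambda>n::nat. \<sigma> ^ n)" using s0 s1 by (intro summable_geometric) auto
  have g1: "(\<lambda>n::nat. \<sigma> ^ n) summable_on UNIV" by (rule summable_nonneg_imp_summable_on[OF g]) (use s0 in auto)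
  have g2: "(\<lambda>n::nat. \<sigma> * \<sigma> ^ n) summable_on UNIV" using summable_on_cmult_right[OF g1] by blast
  have A: "f summable_on (int ` UNIV)"
  proof (subst summable_on_reindex)
    show "inj_on int UNIV" by simp
    have "(f \<circ> int) = (\<lambda>n. \<sigma> ^ n)" unfolding f_def o_def using s0 by (auto simp: powr_realpow)
    then show "(f \<circ> int) summable_on UNIV" using g1 by simp
  qed
  have B: "f summable_on ((\<lambda>n::nat. - int n - 1) ` UNIV)"
  proof (subst summable_on_reindex)
    show "inj_on (\<lambda>n::nat. - int n - 1) UNIV" by (auto simp: inj_on_def)
    have "(f \<circ> (\<lambda>n::nat. - int n - 1)) = (\<lambda>n. \<sigma> * \<sigma> ^ n)"
    proof
      fix n :: nat
      have "\<bar>- int n - 1\<bar> = int (Suc n)" by simp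
      then show "(f \<circ> (\<lambda>n::nat. - int n - 1)) n = \<sigma> * \<sigma> ^ n"
        unfolding f_def o_def using s0 by (simp only: of_int_of_nat_eq powr_realpow) simp
    qed
    then show "(f \<circ> (\<lambda>n::nat. - int n - 1)) summable_on UNIV" using g2 by simp
  qed
  have U: "int ` UNIV \<union> (\<lambda>n::nat. - int n - 1) ` UNIV = (UNIV :: int set)"
  proof -
    have "k \<in> int ` UNIV \<union> (\<lambda>n::nat. - int n - 1) ` UNIV" for k :: int
    proof (cases "k \<ge> 0")
      case True then show ?thesis by (auto intro!: image_eqI[of _ _ "nat k"])
    next
      case False then have "k = - int (nat (- k - 1)) - 1" by simp
      then show ?thesis by blast
    qed
    then show ?thesis by blast
  qed
  have "f summable_on (int ` UNIV \<union> (\<lambda>n::nat. - int n - 1) ` UNIV)"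
    by (rule summable_on_Un_disjoint[OF A B]) auto
  then show ?thesis unfolding U f_def .
qed

lemma op_entry_H:
  "op_entry (schroedinger v) i k = (if k = i + 1 then 1 else 0) + (if k = i - 1 then 1 else 0)
      + (if k = i then complex_of_real (v i) else 0)"
  unfolding op_entry_def schroedinger_def by auto

lemma sum_H_left:
  assumes "finite S"
  shows "(\<Sum>k\<in>S. op_entry (schroedinger v) i k * g k)
       = (if i + 1 \<in> S then g (i + 1) else 0) + (if i - 1 \<in> S then g (i - 1) else 0)
         + (if i \<in> S then complex_of_real (v i) * g i else 0)"
proof -
  have "(\<Sum>k\<in>S. op_entry (schroedinger v) i k * g k)
     = (\<Sum>k\<in>S. (if k = i + 1 then g k else 0) + (if k = i - 1 then g k else 0) + (if k = i then complex_of_real (v i) * g k else 0))"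
    unfolding op_entry_H by (intro sum.cong) (auto simp: distrib_right)
  also have "\<dots> = (if i + 1 \<in> S then g (i + 1) else 0) + (if i - 1 \<in> S then g (i - 1) else 0)
         + (if i \<in> S then complex_of_real (v i) * g i else 0)"
    using assms by (simp add: sum.distrib sum.delta')
  finally show ?thesis .
qed

lemma sum_H_right:
  assumes "finite S"
  shows "(\<Sum>k\<in>S. g k * op_entry (schroedinger v) k j)
       = (if j - 1 \<in> S then g (j - 1) else 0) + (if j + 1 \<in> S then g (j + 1) else 0)
         + (if j \<in> S then complex_of_real (v j) * g j else 0)"
proof -
  have "(\<Sum>k\<in>S. g k * op_entry (schroedinger v) k j)
     = (\<Sum>k\<in>S. (if k = j - 1 then g k else 0) + (if k = j + 1 then g k else 0) + (if k = j then complex_of_real (v j) * g k else 0))"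
    unfolding op_entry_H by (intro sum.cong) (auto simp: distrib_left)
  also have "\<dots> = (if j - 1 \<in> S then g (j - 1) else 0) + (if j + 1 \<in> S then g (j + 1) else 0)
         + (if j \<in> S then complex_of_real (v j) * g j else 0)"
    using assms by (simp add: sum.distrib sum.delta')
  finally show ?thesis .
qed

lemma sec_inv_unique:
  assumes B: "is_section_inverse A n B" and B': "is_section_inverse A n B'"
    and i: "i \<in> sec n" and j: "j \<in> sec n"
  shows "B i j = B' i j"
proof -
  have fin: "finite (sec n)" unfolding sec_def by simp
  have "(\<Sum>l\<in>sec n. (\<Sum>k\<in>sec n. B i k * op_entry A k l) * B' l j)
      = (\<Sum>l\<in>sec n. (if i = l then 1 else 0) * B' l j)"
    using B i by (intro sum.cong) (auto simp: is_section_inverse_def)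
  also have "\<dots> = (\<Sum>l\<in>sec n. (if i = l then B' l j else 0))" by (intro sum.cong) auto
  also have "\<dots> = B' i j" using fin i by (simp add: sum.delta)
  finally have e1: "(\<Sum>l\<in>sec n. (\<Sum>k\<in>sec n. B i k * op_entry A k l) * B' l j) = B' i j" .
  have "(\<Sum>k\<in>sec n. B i k * (\<Sum>l\<in>sec n. op_entry A k l * B' l j))
      = (\<Sum>k\<in>sec n. B i k * (if k = j then 1 else 0))"
    using B' j by (intro sum.cong) (auto simp: is_section_inverse_def)
  also have "\<dots> = (\<Sum>k\<in>sec n. (if k = j then B i k else 0))" by (intro sum.cong) auto
  also have "\<dots> = B i j" using fin j by (simp add: sum.delta')
  finally have e2: "(\<Sum>k\<in>sec n. B i k * (\<Sum>l\<in>sec n. op_entry A k l * B' l j)) = B i j" .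
  have "(\<Sum>l\<in>sec n. (\<Sum>k\<in>sec n. B i k * op_entry A k l) * B' l j)
      = (\<Sum>k\<in>sec n. B i k * (\<Sum>l\<in>sec n. op_entry A k l * B' l j))"
  proof -
    have "(\<Sum>l\<in>sec n. (\<Sum>k\<in>sec n. B i k * op_entry A k l) * B' l j)
        = (\<Sum>l\<in>sec n. \<Sum>k\<in>sec n. B i k * op_entry A k l * B' l j)"
      by (simp add: sum_distrib_right)
    also have "\<dots> = (\<Sum>k\<in>sec n. \<Sum>l\<in>sec n. B i k * op_entry A k l * B' l j)"
      by (rule sum.swap)
    also have "\<dots> = (\<Sum>k\<in>sec n. B i k * (\<Sum>l\<in>sec n. op_entry A k l * B' l j))"
      by (simp add: sum_distrib_left mult.assoc)
    finally show ?thesis .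
  qed
  then show ?thesis using e1 e2 by simp
qed

context hyp
begin

lemma Gs_sec_inv: assumes n: "n \<ge> N0" shows "is_section_inverse (schroedinger v) n (Gs n)"
  unfolding is_section_inverse_def
proof (intro ballI conjI)
  fix i j assume i: "i \<in> sec n" and j: "j \<in> sec n"
  have fin: "finite (sec n)" unfolding sec_def by simp
  have ib: "- int n \<le> i" "i \<le> int n" and jb: "- int n \<le> j" "j \<le> int n" using i j unfolding sec_def by auto
  have a1: "(if i + 1 \<in> sec n then Gs n (i + 1) j else 0) = Gs n (i + 1) j"
  proof (cases "i + 1 \<in> sec n")
    case False then have "i + 1 = int n + 1" using ib unfolding sec_def by auto
    then show ?thesis using Gs_right0[where j=j and n=n] jb False by simp
  qed simp
  have a2: "(if i - 1 \<in> sec n then Gs n (i - 1) j else 0) = Gs n (i - 1) j"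
  proof (cases "i - 1 \<in> sec n")
    case False then have "i - 1 = - int n - 1" using ib unfolding sec_def by auto
    then show ?thesis using Gs_left0[where j=j and n=n] jb False by simp
  qed simp
  show "(\<Sum>k\<in>sec n. op_entry (schroedinger v) i k * Gs n k j) = (if i = j then 1 else 0)"
    unfolding sum_H_left[OF fin] a1 a2 using i Gs_id[OF n, of i j] by simp
  have b1: "(if j - 1 \<in> sec n then Gs n i (j - 1) else 0) = Gs n i (j - 1)"
  proof (cases "j - 1 \<in> sec n")
    case False then have "j - 1 = - int n - 1" using jb unfolding sec_def by auto
    then show ?thesis using Gs_left0[where j=i and n=n] Gs_sym[of n i "j - 1"] ib False by simp
  qed simp
  have b2: "(if j + 1 \<in> sec n then Gs n i (j + 1) else 0) = Gs n i (j + 1)"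
  proof (cases "j + 1 \<in> sec n")
    case False then have "j + 1 = int n + 1" using jb unfolding sec_def by auto
    then show ?thesis using Gs_right0[where j=i and n=n] Gs_sym[of n i "j + 1"] ib False by simp
  qed simp
  show "(\<Sum>k\<in>sec n. Gs n i k * op_entry (schroedinger v) k j) = (if i = j then 1 else 0)"
    unfolding sum_H_right[OF fin] b1 b2 using j Gs_id2[OF n, of i j] by (simp add: algebra_simps)
qed

lemma sec_op_formula: assumes n: "n \<ge> N0"
  shows "section_inv_op (schroedinger v) n x = (\<lambda>i. if i \<in> sec n then (\<Sum>j\<in>sec n. Gs n i j * x j) else 0)"
proof -
  define B where "B = (SOME B. is_section_inverse (schroedinger v) n B)"
  have B: "is_section_inverse (schroedinger v) n B" unfolding B_def by (rule someI[where P="\<lambda>B. is_section_inverse (schroedinger v) n B", OF Gs_sec_inv[OF n]])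
  have "B i j = Gs n i j" if "i \<in> sec n" "j \<in> sec n" for i j
    by (rule sec_inv_unique[OF B Gs_sec_inv[OF n] that])
  then show ?thesis unfolding section_inv_op_def B_def[symmetric] Let_def
    by (intro ext) (auto intro!: sum.cong)
qed

definition gG where "gG k = C1 * r \<bar>k\<bar>" for k

lemma gG_nn: "gG k \<ge> 0" unfolding gG_def using C1_nn by simp

lemma gG_summable: "gG summable_on UNIV"
proof -
  have "(\<lambda>k::int. \<rho> powr real_of_int \<bar>k\<bar>) summable_on UNIV" by (rule geom_int_summable[OF r0 r1])
  then show ?thesis unfolding gG_def[abs_def] r_def by (rule summable_on_cmult_right)
qed

lemma G_bound': "norm (G i j) \<le> gG (i - j)" unfolding gG_def by (rule G_bound)

lemma sec_minus_kop:
  assumes n: "n \<ge> N0" and p: "1 \<le> p" and x: "x \<in> lp p"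
  shows "(\<lambda>i. section_inv_op (schroedinger v) n x i - kop G x i) = kop (D n) x"
proof
  fix i
  have xb: "norm (x j) \<le> lp_norm p x" for j by (rule lp_bound[OF p x])
  have sG: "(\<lambda>j. G i j * x j) summable_on UNIV"
    by (rule summable_bounded_kernel[OF gG_nn gG_summable G_bound' xb])
  define F where "F j = (if i \<in> sec n \<and> j \<in> sec n then Gs n i j else 0) * x j" for j
  have fin: "finite (sec n)" unfolding sec_def by simp
  have sF: "F summable_on UNIV"
    by (rule summable_on_cong_neutral[where S="sec n", THEN iffD1]) (use fin in \<open>auto simp: F_def\<close>)
  have iF: "infsum F UNIV = (if i \<in> sec n then (\<Sum>j\<in>sec n. Gs n i j * x j) else 0)"
  proof -
    have "infsum F UNIV = infsum F (sec n)" by (rule infsum_cong_neutral) (auto simp: F_def)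
    then show ?thesis using fin by (auto simp: F_def)
  qed
  have "kop (D n) x i = infsum (\<lambda>j. F j + - (G i j * x j)) UNIV"
    unfolding kop_def D_def F_def by (simp add: algebra_simps)
  also have "\<dots> = infsum F UNIV + infsum (\<lambda>j. - (G i j * x j)) UNIV"
    by (rule infsum_add[OF sF]) (use sG in \<open>simp add: summable_on_uminus\<close>)
  also have "\<dots> = infsum F UNIV - kop G x i" unfolding kop_def by (simp add: infsum_uminus)
  finally show "section_inv_op (schroedinger v) n x i - kop G x i = kop (D n) x i"
    unfolding sec_op_formula[OF n] iF by simp
qed

end

lemma H_bounded:
  assumes p: "1 \<le> p" and V: "\<And>n. \<bar>v n\<bar> \<le> V"
  shows "bounded_lp_op p (schroedinger v)"
proof -
  have V0: "0 \<le> V" using V[of 0] by simp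
  define g :: "int \<Rightarrow> real" where "g k = (if \<bar>k\<bar> \<le> 1 then V + 1 else 0)" for k
  have g0: "g k \<ge> 0" for k unfolding g_def using V0 by simp
  have fin: "finite {-1..1::int}" by simp
  have gs: "g summable_on UNIV"
    by (rule summable_on_cong_neutral[where S="{-1..1}", THEN iffD1]) (use fin in \<open>auto simp: g_def\<close>)
  have bnd: "norm (schroedinger v x i) \<le> infsum (\<lambda>j. g (i - j) * norm (x j)) UNIV" for x i
  proof -
    have "infsum (\<lambda>j. g (i - j) * norm (x j)) UNIV = infsum (\<lambda>j. g (i - j) * norm (x j)) {i - 1, i, i + 1}"
      by (rule infsum_cong_neutral) (auto simp: g_def)
    also have "\<dots> = (V + 1) * norm (x (i - 1)) + (V + 1) * norm (x i) + (V + 1) * norm (x (i + 1))"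
      by (simp add: g_def)
    finally have e: "infsum (\<lambda>j. g (i - j) * norm (x j)) UNIV = (V + 1) * norm (x (i - 1)) + (V + 1) * norm (x i) + (V + 1) * norm (x (i + 1))" .
    have "norm (schroedinger v x i) \<le> norm (x (i + 1) + x (i - 1)) + norm (complex_of_real (v i) * x i)"
      unfolding schroedinger_def by (rule norm_triangle_ineq)
    also have "\<dots> \<le> norm (x (i + 1)) + norm (x (i - 1)) + \<bar>v i\<bar> * norm (x i)"
      by (simp add: norm_mult norm_triangle_ineq)
    also have "\<dots> \<le> (V + 1) * norm (x (i + 1)) + (V + 1) * norm (x (i - 1)) + (V + 1) * norm (x i)"
    proof (intro add_mono)
      show "norm (x (i + 1)) \<le> (V + 1) * norm (x (i + 1))" using V0 by (simp add: algebra_simps)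
      show "norm (x (i - 1)) \<le> (V + 1) * norm (x (i - 1))" using V0 by (simp add: algebra_simps)
      show "\<bar>v i\<bar> * norm (x i) \<le> (V + 1) * norm (x i)" using V[of i] by (intro mult_right_mono) auto
    qed
    also have "\<dots> = (V + 1) * norm (x (i - 1)) + (V + 1) * norm (x i) + (V + 1) * norm (x (i + 1))" by simp
    finally show ?thesis unfolding e .
  qed
  have "schroedinger v x \<in> lp p \<and> lp_norm p (schroedinger v x) \<le> infsum g UNIV * lp_norm p x" if "x \<in> lp p" for x
    by (rule dom_lp[OF p that g0 gs bnd])
  moreover have "schroedinger v (\<lambda>n. x n + y n) = (\<lambda>n. schroedinger v x n + schroedinger v y n)" for x y
    unfolding schroedinger_def by (auto simp: algebra_simps)
  moreover have "schroedinger v (\<lambda>n. c * x n) = (\<lambda>n. c * schroedinger v x n)" for c x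
    unfolding schroedinger_def by (auto simp: algebra_simps)
  ultimately show ?thesis unfolding bounded_lp_op_def by blast
qed

context hyp
begin

definition s :: "int \<Rightarrow> real" where "s e = \<rho> powr (real_of_int e / 2)"

lemma s_pos [simp]: "0 < s e" unfolding s_def using r0 by simp
lemma s_nn [simp]: "0 \<le> s e" unfolding s_def using r0 by simp
lemma s_mono: "a \<le> b \<Longrightarrow> s b \<le> s a" unfolding s_def using r0 r1 by (intro powr_mono') auto
lemma s_le1: "0 \<le> a \<Longrightarrow> s a \<le> 1" using s_mono[of 0 a] r0 by (simp add: s_def)

lemma half_lt1: "\<rho> powr (1 / 2) < 1"
proof -
  have "\<rho> powr (1 / 2) < 1 powr (1 / 2)" by (rule powr_less_mono2) (use r0 r1 in auto)
  then show ?thesis by simp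
qed
lemma s_add: "s (a + b) = s a * s b" unfolding s_def by (simp add: powr_add[symmetric] add_divide_distrib)

lemma r_s1: "0 \<le> a \<Longrightarrow> a \<le> m \<Longrightarrow> r m \<le> s a"
  unfolding r_def s_def using r0 r1 by (intro powr_mono') auto

lemma r_s2: "a \<le> m \<Longrightarrow> b \<le> m \<Longrightarrow> r m \<le> s a * s b"
  unfolding r_def s_def using r0 r1 by (subst powr_add[symmetric]) (intro powr_mono', auto)

definition gS where "gS k = C3 * s \<bar>k\<bar>" for k

lemma C3_nn: "0 \<le> C3" unfolding C3_def using C1_nn C2_nn by simp
lemma gS_nn: "gS k \<ge> 0" unfolding gS_def using C3_nn by simp

lemma gS_summable: "gS summable_on UNIV"
proof -
  have s0: "0 < \<rho> powr (1 / 2)" using r0 by simp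
  have s1: "\<rho> powr (1 / 2) < 1" by (rule half_lt1)
  have "(\<lambda>k::int. (\<rho> powr (1 / 2)) powr real_of_int \<bar>k\<bar>) summable_on UNIV" by (rule geom_int_summable[OF s0 s1])
  moreover have "(\<rho> powr (1 / 2)) powr real_of_int \<bar>k\<bar> = s \<bar>k\<bar>" for k
    unfolding s_def by (simp add: powr_powr)
  ultimately have "(\<lambda>k. s \<bar>k\<bar>) summable_on UNIV" by simp
  then show ?thesis unfolding gS_def[abs_def] by (rule summable_on_cmult_right)
qed

lemma D_bound_j: assumes n: "n \<ge> N0" shows "norm (D n i j) \<le> gS (i - j) * min 1 (s (int n - \<bar>j\<bar>))"
proof -
  have M1: "\<bar>i - j\<bar> \<le> M n i j" "int n - \<bar>j\<bar> \<le> M n i j" "0 \<le> \<bar>i - j\<bar>" unfolding M_def by auto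
  have "r (M n i j) \<le> s \<bar>i - j\<bar> * min 1 (s (int n - \<bar>j\<bar>))"
    using r_s1[OF M1(3) M1(1)] r_s2[OF M1(1) M1(2)] by (auto simp: min_def)
  then have "C3 * r (M n i j) \<le> C3 * (s \<bar>i - j\<bar> * min 1 (s (int n - \<bar>j\<bar>)))"
    using C3_nn by (intro mult_left_mono) auto
  then show ?thesis using D_bound[OF n, of i j] unfolding gS_def by (simp add: mult.assoc)
qed

lemma D_bound_i: assumes n: "n \<ge> N0" shows "norm (D n i j) \<le> gS (i - j) * min 1 (s (int n - \<bar>i\<bar>))"
proof -
  have M1: "\<bar>i - j\<bar> \<le> M n i j" "int n - \<bar>i\<bar> \<le> M n i j" "0 \<le> \<bar>i - j\<bar>" unfolding M_def by auto
  have "r (M n i j) \<le> s \<bar>i - j\<bar> * min 1 (s (int n - \<bar>i\<bar>))"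
    using r_s1[OF M1(3) M1(1)] r_s2[OF M1(1) M1(2)] by (auto simp: min_def)
  then have "C3 * r (M n i j) \<le> C3 * (s \<bar>i - j\<bar> * min 1 (s (int n - \<bar>i\<bar>)))"
    using C3_nn by (intro mult_left_mono) auto
  then show ?thesis using D_bound[OF n, of i j] unfolding gS_def by (simp add: mult.assoc)
qed

lemma s_tendsto: "(\<lambda>n::nat. s (int n - k)) \<longlonglongrightarrow> 0"
proof -
  have e: "s (int n - k) = s (- k) * (\<rho> powr (1 / 2)) ^ n" for n
  proof -
    have "s (int n - k) = s (- k) * s (int n)" using s_add[of "- k" "int n"] by simp
    moreover have "s (int n) = (\<rho> powr (1 / 2)) ^ n"
    proof -
      have "(\<rho> powr (1 / 2)) ^ n = (\<rho> powr (1 / 2)) powr real n" using r0 by (simp add: powr_realpow)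
      also have "\<dots> = \<rho> powr (1 / 2 * real n)" by (rule powr_powr)
      finally show ?thesis unfolding s_def by simp
    qed
    ultimately show ?thesis by simp
  qed
  have "(\<lambda>n. (\<rho> powr (1 / 2)) ^ n) \<longlonglongrightarrow> 0" using r0 half_lt1 by (intro LIMSEQ_power_zero) simp
  then have "(\<lambda>n. s (- k) * (\<rho> powr (1 / 2)) ^ n) \<longlonglongrightarrow> s (- k) * 0" by (intro tendsto_mult tendsto_const)
  then show ?thesis unfolding e by simp
qed

end

lemma opnorm_bound:
  assumes p: "1 \<le> p" and T: "\<And>x. x \<in> lp p \<Longrightarrow> T x \<in> lp p \<and> lp_norm p (T x) \<le> B * lp_norm p x"
    and B0: "0 \<le> B"
  shows "0 \<le> lp_opnorm p T \<and> lp_opnorm p T \<le> B"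
proof -
  define S where "S = {lp_norm p (T x) | x. x \<in> lp p \<and> lp_norm p x \<le> 1}"
  have z: "(\<lambda>_. 0) \<in> lp p" "lp_norm p (\<lambda>_. 0) = 0" using lp_zero[OF p] lp_norm_zero[OF p] by auto
  have mem: "lp_norm p (T (\<lambda>_. 0)) \<in> S" unfolding S_def using z by auto
  have ub: "y \<le> B" if yS: "y \<in> S" for y
  proof -
    obtain x where x: "y = lp_norm p (T x)" "x \<in> lp p" "lp_norm p x \<le> 1" using yS unfolding S_def by auto
    have "lp_norm p (T x) \<le> B * lp_norm p x" using T[OF x(2)] by simp
    also have "\<dots> \<le> B * 1" using B0 x(3) by (intro mult_left_mono) auto
    finally show ?thesis using x by simp
  qed
  have bdd: "bdd_above S" unfolding bdd_above_def using ub by blast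
  have ne: "S \<noteq> {}" using mem by auto
  have "0 \<le> lp_norm p (T (\<lambda>_. 0))" using lp_norm_nonneg[OF p] T[OF z(1)] by simp
  also have "\<dots> \<le> Sup S" by (rule cSup_upper[OF mem bdd])
  finally have "0 \<le> Sup S" .
  moreover have "Sup S \<le> B" by (rule cSup_least[OF ne]) (rule ub)
  ultimately show ?thesis unfolding lp_opnorm_def S_def by simp
qed

lemma lp_weight_tendsto:
  assumes p: "1 \<le> p" "p \<noteq> \<infinity>" and x: "x \<in> lp p"
    and mu0: "\<And>n j. 0 \<le> \<mu> n j" and mu1: "\<And>n j. \<mu> n j \<le> 1"
    and unif: "\<And>m e. e > 0 \<Longrightarrow> \<exists>N. \<forall>n\<ge>N. \<forall>j\<in>sec m. \<mu> n j \<le> e"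
  shows "(\<lambda>n. lp_norm p (\<lambda>j. complex_of_real (\<mu> n j) * x j)) \<longlonglongrightarrow> 0"
proof (rule LIMSEQ_I)
  fix \<epsilon> :: real assume e0: "0 < \<epsilon>"
  define P where "P = real_of_ereal p"
  have P: "P \<ge> 1" using realp_ge1[OF p] P_def by simp
  define a where "a j = norm (x j) powr P" for j
  have a0: "a j \<ge> 0" for j unfolding a_def by simp
  have as: "a summable_on UNIV" using x p(2) lp_fin[of p x] unfolding P_def a_def[abs_def] by auto
  define A where "A = infsum a UNIV"
  have A0: "A \<ge> 0" unfolding A_def by (rule infsum_nonneg) (use a0 in auto)
  define \<delta> where "\<delta> = \<epsilon> powr P / 2"
  have d0: "\<delta> > 0" unfolding \<delta>_def using e0 by simp
  have "eventually (\<lambda>F. dist (sum a F) A < \<delta>) (finite_subsets_at_top UNIV)"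
    using infsum_tendsto[OF as] d0 unfolding A_def by (rule tendstoD)
  then obtain X where X0: "finite X" "\<forall>Y. finite Y \<and> X \<subseteq> Y \<and> Y \<subseteq> UNIV \<longrightarrow> dist (sum a Y) A < \<delta>"
    unfolding eventually_finite_subsets_at_top by (elim exE conjE) (rule that)
  then have X: "finite X" "\<And>Y. finite Y \<Longrightarrow> X \<subseteq> Y \<Longrightarrow> dist (sum a Y) A < \<delta>" by auto
  define m where "m = nat (Max (insert 0 (abs ` X)))"
  have Xm: "X \<subseteq> sec m"
  proof
    fix j assume j: "j \<in> X"
    have fX: "finite (insert 0 (abs ` X))" using X(1) by simp
    have "\<bar>j\<bar> \<le> Max (insert 0 (abs ` X))" by (rule Max_ge[OF fX]) (use j in simp)
    moreover have "0 \<le> Max (insert 0 (abs ` X))" by (rule Max_ge[OF fX]) simp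
    ultimately have "\<bar>j\<bar> \<le> int m" unfolding m_def by simp
    then show "j \<in> sec m" unfolding sec_def by auto
  qed
  have fin: "finite (sec m)" unfolding sec_def by simp
  have tail: "A - sum a (sec m) < \<delta>" using X(2)[OF fin Xm] by (simp add: dist_real_def)
  define \<eta> where "\<eta> = (\<delta> / (A + 1)) powr (1 / P)"
  have eta0: "\<eta> > 0" unfolding \<eta>_def using d0 A0 by simp
  have etaP: "\<eta> powr P = \<delta> / (A + 1)" unfolding \<eta>_def using d0 A0 P by (simp add: powr_powr)
  obtain N where N: "\<And>n j. n \<ge> N \<Longrightarrow> j \<in> sec m \<Longrightarrow> \<mu> n j \<le> \<eta>" using unif[OF eta0] by blast
  show "\<exists>no. \<forall>n\<ge>no. norm (lp_norm p (\<lambda>j. complex_of_real (\<mu> n j) * x j) - 0) < \<epsilon>"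
  proof (intro exI allI impI)
    fix n assume n: "n \<ge> N"
    define f where "f j = \<mu> n j powr P * a j" for j
    have fe: "norm (complex_of_real (\<mu> n j) * x j) powr P = f j" for j
      unfolding f_def a_def using mu0[of n j] by (simp add: norm_mult powr_mult)
    have f0: "f j \<ge> 0" for j unfolding f_def using a0 by simp
    have fa: "f j \<le> a j" for j
    proof -
      have "\<mu> n j powr P \<le> 1 powr P" using mu0 mu1 P by (intro powr_mono2) auto
      then show ?thesis unfolding f_def using a0[of j] by (simp add: mult_left_le_one_le)
    qed
    have fs: "f summable_on UNIV" by (rule summable_on_comparison_test[OF as]) (use fa f0 in auto)
    have fs1: "f summable_on (sec m)" using fin by simp
    have fs2: "f summable_on (UNIV - sec m)" by (rule summable_on_subset[OF fs]) auto
    have as2: "a summable_on (UNIV - sec m)" by (rule summable_on_subset[OF as]) auto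
    have split: "infsum f UNIV = sum f (sec m) + infsum f (UNIV - sec m)"
      using infsum_Un_disjoint[OF fs1 fs2] fin by (simp add: Un_absorb1)
    have splita: "A = sum a (sec m) + infsum a (UNIV - sec m)"
      unfolding A_def using infsum_Un_disjoint[OF _ as2, of "sec m"] fin by (simp add: Un_absorb1)
    have "infsum f (UNIV - sec m) \<le> infsum a (UNIV - sec m)" by (rule infsum_mono[OF fs2 as2]) (rule fa)
    also have "\<dots> < \<delta>" using splita tail by simp
    finally have t2: "infsum f (UNIV - sec m) < \<delta>" .
    have "sum f (sec m) \<le> sum (\<lambda>j. \<eta> powr P * a j) (sec m)"
    proof (rule sum_mono)
      fix j assume j: "j \<in> sec m"
      have "\<mu> n j powr P \<le> \<eta> powr P" using N[OF n j] mu0 P by (intro powr_mono2) auto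
      then show "f j \<le> \<eta> powr P * a j" unfolding f_def using a0[of j] by (intro mult_right_mono) auto
    qed
    also have "\<dots> = \<eta> powr P * sum a (sec m)" by (simp add: sum_distrib_left)
    also have "\<dots> \<le> \<eta> powr P * A"
      using splita infsum_nonneg[of "UNIV - sec m" a] a0 by (intro mult_left_mono) auto
    also have "\<dots> = \<delta> * (A / (A + 1))" unfolding etaP by simp
    also have "\<dots> \<le> \<delta>"
    proof -
      have "A / (A + 1) \<le> 1" using A0 by simp
      then have "\<delta> * (A / (A + 1)) \<le> \<delta> * 1" using d0 by (intro mult_left_mono) auto
      then show ?thesis by simp
    qed
    finally have t1: "sum f (sec m) \<le> \<delta>" .
    have tot: "infsum f UNIV < \<epsilon> powr P" using split t1 t2 unfolding \<delta>_def by simp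
    have "lp_norm p (\<lambda>j. complex_of_real (\<mu> n j) * x j) = (infsum f UNIV) powr (1 / P)"
      using p(2) fe unfolding P_def by (simp add: lp_norm_fin)
    also have "\<dots> < (\<epsilon> powr P) powr (1 / P)"
      using tot P infsum_nonneg[of UNIV f] f0 by (intro powr_less_mono2) auto
    also have "\<dots> = \<epsilon>" using P e0 by (simp add: powr_powr)
    finally have lt: "lp_norm p (\<lambda>j. complex_of_real (\<mu> n j) * x j) < \<epsilon>" .
    have "0 \<le> lp_norm p (\<lambda>j. complex_of_real (\<mu> n j) * x j)"
      using p(2) unfolding lp_norm_fin[OF p(2)] by simp
    then show "norm (lp_norm p (\<lambda>j. complex_of_real (\<mu> n j) * x j) - 0) < \<epsilon>" using lt by simp
  qed
qed

context hyp
begin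

lemma G_id: "G (i + 1) j + G (i - 1) j + complex_of_real (v i) * G i j = (if i = j then 1 else 0)"
  unfolding G_def by (rule green_id[OF sol_u sol_s W0])

lemma G_id2: "G i (j + 1) + G i (j - 1) + complex_of_real (v j) * G i j = (if i = j then 1 else 0)"
  unfolding G_def by (rule green_id2[OF sol_u sol_s W0])

lemma H_inverse:
  assumes p: "1 \<le> p" and V: "\<And>n. \<bar>v n\<bar> \<le> V"
  shows "is_lp_inverse p (schroedinger v) (kop G)"
  unfolding is_lp_inverse_def
proof (intro conjI ballI)
  show "bounded_lp_op p (kop G)" by (rule bounded_lp_op_kop[OF p gG_nn gG_summable G_bound'])
  fix x assume x: "x \<in> lp p"
  show "kop G (schroedinger v x) = x" by (rule kop_H[OF p x gG_nn gG_summable G_bound' V G_id2])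
  show "schroedinger v (kop G x) = x" by (rule H_kop[OF p x gG_nn gG_summable G_bound' G_id])
qed

lemma H_invertible:
  assumes p: "1 \<le> p" and V: "\<And>n. \<bar>v n\<bar> \<le> V"
  shows "invertible_lp p (schroedinger v)"
  unfolding invertible_lp_def using H_bounded[of p v V, OF p V] H_inverse[OF p V] by blast

lemma lp_inv_eq:
  assumes p: "1 \<le> p" and V: "\<And>n. \<bar>v n\<bar> \<le> V" and x: "x \<in> lp p"
  shows "lp_inv p (schroedinger v) x = kop G x"
proof -
  define B where "B = lp_inv p (schroedinger v)"
  have B: "is_lp_inverse p (schroedinger v) B" unfolding B_def lp_inv_def
    by (rule someI[where P="is_lp_inverse p (schroedinger v)", OF H_inverse[OF p V]])
  have k: "kop G x \<in> lp p" using H_inverse[OF p V] x unfolding is_lp_inverse_def bounded_lp_op_def by blast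
  have "schroedinger v (kop G x) = x" using H_inverse[OF p V] x unfolding is_lp_inverse_def by blast
  then have "B x = B (schroedinger v (kop G x))" by simp
  also have "\<dots> = kop G x" using B k unfolding is_lp_inverse_def by blast
  finally show ?thesis unfolding B_def .
qed

lemma strong_fin:
  assumes p: "1 \<le> p" "p \<noteq> \<infinity>" and V: "\<And>n. \<bar>v n\<bar> \<le> V"
  shows "strong_conv p (section_inv_op (schroedinger v)) (lp_inv p (schroedinger v))"
  unfolding strong_conv_def using p(2)
proof (simp, intro ballI)
  fix x assume x: "x \<in> lp p"
  define \<mu> where "\<mu> n j = min 1 (s (int n - \<bar>j\<bar>))" for n :: nat and j :: int
  define z where "z n = (\<lambda>j. complex_of_real (\<mu> n j) * x j)" for n
  define SS where "SS = infsum gS UNIV"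
  have mu0: "0 \<le> \<mu> n j" and mu1: "\<mu> n j \<le> 1" for n j unfolding \<mu>_def by auto
  have zn: "norm (z n j) \<le> norm (x j)" for n j unfolding z_def using mu0 mu1 by (simp add: norm_mult mult_left_le_one_le)
  have zlp: "z n \<in> lp p" for n using lp_mono[of p x "z n", OF p(1) x zn[of n]] by blast
  have unif: "\<exists>N. \<forall>n\<ge>N. \<forall>j\<in>sec m. \<mu> n j \<le> e" if e: "e > 0" for m e
  proof -
    have "eventually (\<lambda>n. s (int n - int m) < e) sequentially"
      using s_tendsto[of "int m"] e by (rule order_tendstoD(2))
    then obtain N where N: "\<And>n. n \<ge> N \<Longrightarrow> s (int n - int m) < e" unfolding eventually_sequentially by blast
    have "\<mu> n j \<le> e" if "n \<ge> N" "j \<in> sec m" for n j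
    proof -
      have "\<bar>j\<bar> \<le> int m" using that(2) unfolding sec_def by auto
      then have "s (int n - \<bar>j\<bar>) \<le> s (int n - int m)" by (intro s_mono) auto
      then show ?thesis unfolding \<mu>_def using N[OF that(1)] by auto
    qed
    then show ?thesis by blast
  qed
  have lim: "(\<lambda>n. lp_norm p (z n)) \<longlonglongrightarrow> 0" unfolding z_def
    by (rule lp_weight_tendsto[OF p x mu0 mu1 unif]) auto
  have SS0: "0 \<le> SS" unfolding SS_def by (rule infsum_nonneg) (use gS_nn in auto)
  have ev: "eventually (\<lambda>n. 0 \<le> lp_norm p (\<lambda>i. section_inv_op (schroedinger v) n x i - lp_inv p (schroedinger v) x i)
        \<and> lp_norm p (\<lambda>i. section_inv_op (schroedinger v) n x i - lp_inv p (schroedinger v) x i) \<le> SS * lp_norm p (z n)) sequentially"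
    unfolding eventually_sequentially
  proof (intro exI allI impI)
    fix n assume n: "n \<ge> N0"
    have e: "(\<lambda>i. section_inv_op (schroedinger v) n x i - lp_inv p (schroedinger v) x i) = kop (D n) x"
      unfolding lp_inv_eq[OF p(1) V x] by (rule sec_minus_kop[OF n p(1) x])
    have b: "norm (D n i j * x j) \<le> gS (i - j) * norm (z n j)" for i j
    proof -
      have "norm (D n i j) * norm (x j) \<le> gS (i - j) * \<mu> n j * norm (x j)"
        using D_bound_j[OF n, of i j] unfolding \<mu>_def by (intro mult_right_mono) auto
      then show ?thesis unfolding z_def using mu0[of n j] by (simp add: norm_mult mult.assoc)
    qed
    have kd: "kop (D n) x \<in> lp p \<and> lp_norm p (kop (D n) x) \<le> SS * lp_norm p (z n)"
      unfolding SS_def by (rule kop_dom[OF p(1) zlp gS_nn gS_summable b])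
    show "0 \<le> lp_norm p (\<lambda>i. section_inv_op (schroedinger v) n x i - lp_inv p (schroedinger v) x i)
        \<and> lp_norm p (\<lambda>i. section_inv_op (schroedinger v) n x i - lp_inv p (schroedinger v) x i) \<le> SS * lp_norm p (z n)"
      unfolding e using kd lp_norm_nonneg[OF p(1)] by blast
  qed
  have "(\<lambda>n. SS * lp_norm p (z n)) \<longlonglongrightarrow> SS * 0" by (intro tendsto_mult tendsto_const lim)
  then have lim2: "(\<lambda>n. SS * lp_norm p (z n)) \<longlonglongrightarrow> 0" by simp
  have ev1: "eventually (\<lambda>n. 0 \<le> lp_norm p (\<lambda>i. section_inv_op (schroedinger v) n x i - lp_inv p (schroedinger v) x i)) sequentially"
    using ev by (rule eventually_mono) (rule conjunct1)
  have ev2: "eventually (\<lambda>n. lp_norm p (\<lambda>i. section_inv_op (schroedinger v) n x i - lp_inv p (schroedinger v) x i) \<le> SS * lp_norm p (z n)) sequentially"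
    using ev by (rule eventually_mono) (rule conjunct2)
  show "(\<lambda>n. lp_norm p (\<lambda>i. section_inv_op (schroedinger v) n x i - lp_inv p (schroedinger v) x i)) \<longlonglongrightarrow> 0"
    by (rule tendsto_sandwich[OF ev1 ev2 tendsto_const lim2])
qed

end

context hyp
begin

lemma opn_limit:
  assumes V: "\<And>n. \<bar>v n\<bar> \<le> V"
    and rep: "\<And>n x. n \<ge> N0 \<Longrightarrow> x \<in> lp \<infinity> \<Longrightarrow> T n x = kop (Dk n) x"
    and bd: "\<And>n i j. n \<ge> N0 \<Longrightarrow> norm (Dk n i j) \<le> s (int n - int k) * gS (i - j)"
  shows "(\<lambda>n. lp_opnorm \<infinity> (T n)) \<longlonglongrightarrow> 0"
proof -
  define SS where "SS = infsum gS UNIV"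
  have SS0: "0 \<le> SS" unfolding SS_def by (rule infsum_nonneg) (use gS_nn in auto)
  have p: "(1::ereal) \<le> \<infinity>" by simp
  have ev: "eventually (\<lambda>n. 0 \<le> lp_opnorm \<infinity> (T n) \<and> lp_opnorm \<infinity> (T n) \<le> s (int n - int k) * SS) sequentially"
    unfolding eventually_sequentially
  proof (intro exI allI impI)
    fix n assume n: "n \<ge> N0"
    define g' where "g' t = s (int n - int k) * gS t" for t
    have g'0: "g' t \<ge> 0" for t unfolding g'_def using gS_nn by simp
    have g's: "g' summable_on UNIV" unfolding g'_def[abs_def] using gS_summable by (rule summable_on_cmult_right)
    have g'i: "infsum g' UNIV = s (int n - int k) * SS" unfolding g'_def SS_def
      by (rule infsum_cmult_right) (use gS_summable in simp)
    have "T n x \<in> lp \<infinity> \<and> lp_norm \<infinity> (T n x) \<le> (s (int n - int k) * SS) * lp_norm \<infinity> x" if x: "x \<in> lp \<infinity>" for x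
    proof -
      have b: "norm (Dk n i j * x j) \<le> g' (i - j) * norm (x j)" for i j
        unfolding g'_def norm_mult using bd[OF n, of i j] by (intro mult_right_mono) auto
      show ?thesis unfolding rep[OF n x] using kop_dom[OF p x g'0 g's b] unfolding g'i by simp
    qed
    then show "0 \<le> lp_opnorm \<infinity> (T n) \<and> lp_opnorm \<infinity> (T n) \<le> s (int n - int k) * SS"
      using SS0 by (intro opnorm_bound[OF p]) auto
  qed
  have ev1: "eventually (\<lambda>n. 0 \<le> lp_opnorm \<infinity> (T n)) sequentially"
    using ev by (rule eventually_mono) (rule conjunct1)
  have ev2: "eventually (\<lambda>n. lp_opnorm \<infinity> (T n) \<le> s (int n - int k) * SS) sequentially"
    using ev by (rule eventually_mono) (rule conjunct2)
  have "(\<lambda>n. s (int n - int k) * SS) \<longlonglongrightarrow> 0 * SS" by (intro tendsto_mult tendsto_const s_tendsto)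
  then have lim: "(\<lambda>n. s (int n - int k) * SS) \<longlonglongrightarrow> 0" by simp
  show ?thesis by (rule tendsto_sandwich[OF ev1 ev2 tendsto_const lim])
qed

lemma proj_lp: "x \<in> lp \<infinity> \<Longrightarrow> proj k x \<in> lp \<infinity>"
  using lp_mono[of \<infinity> x "proj k x"] unfolding proj_def by auto

lemma strong_inf:
  assumes V: "\<And>n. \<bar>v n\<bar> \<le> V"
  shows "strong_conv \<infinity> (section_inv_op (schroedinger v)) (lp_inv \<infinity> (schroedinger v))"
  unfolding strong_conv_def
proof (simp, intro allI conjI)
  have p: "(1::ereal) \<le> \<infinity>" by simp
  fix k
  show "(\<lambda>n. lp_opnorm \<infinity> (\<lambda>x. proj k (\<lambda>i. section_inv_op (schroedinger v) n x i - lp_inv \<infinity> (schroedinger v) x i))) \<longlonglongrightarrow> 0"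
  proof (rule opn_limit[OF V, where Dk="\<lambda>n i j. if i \<in> sec k then D n i j else 0"])
    fix n x assume n: "n \<ge> N0" and x: "x \<in> lp \<infinity>"
    have e: "(\<lambda>i. section_inv_op (schroedinger v) n x i - lp_inv \<infinity> (schroedinger v) x i) = kop (D n) x"
      unfolding lp_inv_eq[OF p V x] by (rule sec_minus_kop[OF n p x])
    show "proj k (\<lambda>i. section_inv_op (schroedinger v) n x i - lp_inv \<infinity> (schroedinger v) x i)
        = kop (\<lambda>i j. if i \<in> sec k then D n i j else 0) x"
      unfolding e proj_def kop_def by (intro ext) auto
  next
    fix n i j assume n: "n \<ge> N0"
    show "norm (if i \<in> sec k then D n i j else 0) \<le> s (int n - int k) * gS (i - j)"
    proof (cases "i \<in> sec k")
      case True
      then have "\<bar>i\<bar> \<le> int k" unfolding sec_def by auto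
      then have "min 1 (s (int n - \<bar>i\<bar>)) \<le> s (int n - int k)" using s_mono[of "int n - int k" "int n - \<bar>i\<bar>"] by auto
      then have "gS (i - j) * min 1 (s (int n - \<bar>i\<bar>)) \<le> gS (i - j) * s (int n - int k)"
        using gS_nn by (intro mult_left_mono) auto
      then show ?thesis using True D_bound_i[OF n, of i j] by (simp add: mult.commute)
    next
      case False then show ?thesis using gS_nn by simp
    qed
  qed
  show "(\<lambda>n. lp_opnorm \<infinity> (\<lambda>x i. section_inv_op (schroedinger v) n (proj k x) i - lp_inv \<infinity> (schroedinger v) (proj k x) i)) \<longlonglongrightarrow> 0"
  proof (rule opn_limit[OF V, where Dk="\<lambda>n i j. D n i j * (if j \<in> sec k then 1 else 0)"])
    fix n x assume n: "n \<ge> N0" and x: "x \<in> lp \<infinity>"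
    have px: "proj k x \<in> lp \<infinity>" by (rule proj_lp[OF x])
    have e: "(\<lambda>i. section_inv_op (schroedinger v) n (proj k x) i - lp_inv \<infinity> (schroedinger v) (proj k x) i) = kop (D n) (proj k x)"
      unfolding lp_inv_eq[OF p V px] by (rule sec_minus_kop[OF n p px])
    show "(\<lambda>i. section_inv_op (schroedinger v) n (proj k x) i - lp_inv \<infinity> (schroedinger v) (proj k x) i)
        = kop (\<lambda>i j. D n i j * (if j \<in> sec k then 1 else 0)) x"
      by (subst e) (auto simp: kop_def proj_def intro!: ext infsum_cong)
  next
    fix n i j assume n: "n \<ge> N0"
    show "norm (D n i j * (if j \<in> sec k then 1 else 0)) \<le> s (int n - int k) * gS (i - j)"
    proof (cases "j \<in> sec k")
      case True
      then have "\<bar>j\<bar> \<le> int k" unfolding sec_def by auto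
      then have "min 1 (s (int n - \<bar>j\<bar>)) \<le> s (int n - int k)" using s_mono[of "int n - int k" "int n - \<bar>j\<bar>"] by auto
      then have "gS (i - j) * min 1 (s (int n - \<bar>j\<bar>)) \<le> gS (i - j) * s (int n - int k)"
        using gS_nn by (intro mult_left_mono) auto
      then show ?thesis using True D_bound_j[OF n, of i j] by (simp add: mult.commute)
    next
      case False then show ?thesis using gS_nn by simp
    qed
  qed
qed

lemma fsm:
  assumes p: "1 \<le> p" and V: "\<And>n. \<bar>v n\<bar> \<le> V"
  shows "fsm_applicable p (schroedinger v)"
  unfolding fsm_applicable_def
proof (intro conjI)
  show "invertible_lp p (schroedinger v)" by (rule H_invertible[OF p V])
  show "\<exists>N. \<forall>n\<ge>N. section_invertible (schroedinger v) n"
    unfolding section_invertible_def using Gs_sec_inv by blast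
  show "strong_conv p (section_inv_op (schroedinger v)) (lp_inv p (schroedinger v))"
  proof (cases "p = \<infinity>")
    case True then show ?thesis using strong_inf[OF V] by simp
  next
    case False then show ?thesis by (rule strong_fin[OF p _ V])
  qed
qed

end

lemma v_bounded:
  fixes v :: "int \<Rightarrow> real"
  assumes K: "K \<ge> 1" and per: "\<forall>n. v (n + int K) = v n"
  shows "\<bar>v n\<bar> \<le> (\<Sum>r<K. \<bar>v (int r)\<bar>)"
proof -
  define r where "r = nat (n mod int K)"
  have rK: "r < K" unfolding r_def using K by (simp add: nat_less_iff)
  have "v n = v (int r)" unfolding r_def using per_mod[OF K per, of n] K by simp
  then show ?thesis using member_le_sum[of r "{..<K}" "\<lambda>r. \<bar>v (int r)\<bar>"] rK by simp
qed

theorem backward: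
  fixes p :: ereal and v :: "int \<Rightarrow> real" and K :: nat
  assumes p: "1 \<le> p"
    and K: "K \<ge> 1"
    and per: "\<forall>n. v (n + int K) = v n"
    and cases: "K = 2
             \<or> (K \<le> 8 \<and> (\<exists>lam\<in>\<rat>. \<forall>n. v n \<in> {0, lam}))
             \<or> (\<forall>n. v n \<in> \<int>)"
    and t: "\<bar>trace (monodromy v K)\<bar> > 2"
  shows "fsm_applicable p (schroedinger v)"
proof -
  obtain \<phi>u \<phi>s \<rho> c C where h: "sol v \<phi>u" "sol v \<phi>s" "wr \<phi>u \<phi>s 0 \<noteq> 0" "0 < \<rho>" "\<rho> < 1" "0 < c"
    "\<And>n. c * \<rho> powr real_of_int n \<le> norm (\<phi>s n) \<and> norm (\<phi>s n) \<le> C * \<rho> powr real_of_int n \<and>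
          c * \<rho> powr (- real_of_int n) \<le> norm (\<phi>u n) \<and> norm (\<phi>u n) \<le> C * \<rho> powr (- real_of_int n)"
    using hyp_setup[OF K per cases t] by blast
  interpret hyp v \<phi>u \<phi>s \<rho> c C by (rule hyp.intro) (use h in auto)
  show ?thesis by (rule fsm[OF p v_bounded[OF K per]])
qed

lemma unit_root:
  fixes t :: real
  assumes t: "\<bar>t\<bar> \<le> 2"
  shows "\<exists>\<mu>::complex. \<mu>\<^sup>2 - complex_of_real t * \<mu> + 1 = 0 \<and> norm \<mu> = 1"
proof -
  have t2: "t\<^sup>2 \<le> 4" using t by (metis abs_le_square_iff abs_numeral power2_abs real_sqrt_four real_sqrt_le_iff real_sqrt_pow2 zero_le_numeral)
  define b where "b = sqrt (4 - t\<^sup>2) / 2"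
  have b2: "b\<^sup>2 = (4 - t\<^sup>2) / 4" unfolding b_def using t2 by (simp add: power_divide)
  define \<mu> where "\<mu> = Complex (t / 2) b"
  have "\<mu>\<^sup>2 - complex_of_real t * \<mu> + 1 = 0"
    unfolding \<mu>_def by (simp add: complex_eq_iff power2_eq_square algebra_simps b2[unfolded power2_eq_square] field_simps)
  moreover have "norm \<mu> = 1" unfolding \<mu>_def cmod_def using b2 by (simp add: power_divide field_simps)
  ultimately show ?thesis by blast
qed

lemma bloch_iter:
  assumes K: "K \<ge> 1" and mu: "\<mu> \<noteq> 0"
  shows "bloch v K \<mu> w (n + int (j * K)) = \<mu> ^ j * bloch v K \<mu> w n"
proof (induction j)
  case 0 then show ?case by simp
next
  case (Suc j)
  have e: "n + int (Suc j * K) = (n + int (j * K)) + int K" by simp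
  show ?case unfolding e bloch_shift[OF K mu] Suc.IH by simp
qed

lemma forward:
  fixes p :: ereal and v :: "int \<Rightarrow> real" and K :: nat
  assumes p: "1 \<le> p" and K: "K \<ge> 1" and per: "\<forall>n. v (n + int K) = v n"
    and inv: "invertible_lp p (schroedinger v)"
  shows "\<bar>trace (monodromy v K)\<bar> > 2"
proof (rule ccontr)
  assume "\<not> \<bar>trace (monodromy v K)\<bar> > 2"
  then have t: "\<bar>trace (monodromy v K)\<bar> \<le> 2" by simp
  obtain \<mu> where mu: "\<mu>\<^sup>2 - complex_of_real (trace (monodromy v K)) * \<mu> + 1 = 0" "norm \<mu> = 1"
    using unit_root[OF t] by blast
  have mu0: "\<mu> \<noteq> 0" using mu(2) by auto
  have ch: "\<mu>\<^sup>2 - (fst (fw v (1, 0) K) + snd (fw v (0, 1) K)) * \<mu> + 1 = 0"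
    using mu(1) unfolding trace_monodromy[symmetric] .
  obtain w where w: "w \<noteq> (0, 0)" "fw v w K = (\<mu> * fst w, \<mu> * snd w)" using eigvec[OF ch] by blast
  define u where "u = bloch v K \<mu> w"
  have su: "sol v u" unfolding u_def by (rule bloch_sol[OF K per mu0 w(2)])
  have Hu: "schroedinger v u = (\<lambda>_. 0)" using su unfolding sol_def schroedinger_def by auto
  define Bu where "Bu = (\<Sum>r<K. norm (fst (fw v w r)))"
  have ub: "norm (u n) \<le> Bu" for n
  proof -
    define r where "r = nat (n mod int K)"
    have rK: "r < K" unfolding r_def using K by (simp add: nat_less_iff)
    have "norm (u n) = norm (fst (fw v w r))" unfolding u_def bloch_norm r_def[symmetric] using mu(2) by simp
    also have "\<dots> \<le> Bu" unfolding Bu_def using member_le_sum[of r "{..<K}" "\<lambda>r. norm (fst (fw v w r))"] rK by simp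
    finally show ?thesis .
  qed
  have Bu0: "0 \<le> Bu" using ub[of 0] norm_ge_zero order_trans by blast
  have u0: "u 0 = fst w" "u (-1) = snd w" unfolding u_def using bloch_init[OF K mu0 w(2)] by auto
  have uj: "norm (u (int (j * K) + e)) = norm (u e)" for j e
    using bloch_iter[OF K mu0, of v w e j] mu(2) unfolding u_def by (simp add: add.commute norm_mult norm_power)
  obtain B where B: "is_lp_inverse p (schroedinger v) B" using inv unfolding invertible_lp_def by blast
  then obtain Cb where Cb: "\<And>x. x \<in> lp p \<Longrightarrow> lp_norm p (B x) \<le> Cb * lp_norm p x"
    and BH: "\<And>x. x \<in> lp p \<Longrightarrow> B (schroedinger v x) = x"
    and Bh: "\<And>x c. x \<in> lp p \<Longrightarrow> B (\<lambda>n. c * x n) = (\<lambda>n. c * B x n)"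
    unfolding is_lp_inverse_def bounded_lp_op_def by blast
  show False
  proof (cases "p = \<infinity>")
    case True
    have "bounded (range u)" unfolding bounded_iff using ub by auto
    then have ul: "u \<in> lp p" using True lp_inf by simp
    have z: "(\<lambda>_. 0) \<in> lp p" by (rule lp_zero[OF p])
    have "B (\<lambda>_. 0) = B (\<lambda>n. 0 * (0::complex))" by simp
    also have "\<dots> = (\<lambda>n. 0 * B (\<lambda>_. 0) n)" using Bh[OF z, of 0] by simp
    finally have B0: "B (\<lambda>_. 0) = (\<lambda>_. 0)" by simp
    have "u = (\<lambda>_. 0)" using BH[OF ul] unfolding Hu B0 by simp
    then have "w = (0, 0)" using u0 by (cases w) auto
    then show False using w(1) by simp
  next
    case False
    define P where "P = real_of_ereal p"
    have P: "P \<ge> 1" using realp_ge1[OF p False] P_def by simp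
    obtain e \<gamma> where eg: "\<gamma> > 0" "\<And>j. norm (u (int (j * K) + e)) = \<gamma>" "e \<in> {-1, 0}"
    proof (cases "fst w = 0")
      case True
      then have "snd w \<noteq> 0" using w(1) by (cases w) auto
      then show ?thesis using that[of "norm (snd w)" "-1"] uj[of _ "-1"] u0 by simp
    next
      case False
      then show ?thesis using that[of "norm (fst w)" 0] uj[of _ 0] u0 by simp
    qed
    define Y where "Y = (2 + (\<Sum>r<K. \<bar>v (int r)\<bar>)) * Bu"
    have Vb: "\<bar>v n\<bar> \<le> (\<Sum>r<K. \<bar>v (int r)\<bar>)" for n by (rule v_bounded[OF K per])
    have Y0: "0 \<le> Y" unfolding Y_def using Bu0 Vb[of 0] by simp
    define R where "R = \<bar>Cb\<bar> * (4 * Y powr P) powr (1 / P)"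
    have R0: "0 \<le> R" unfolding R_def by simp
    obtain N :: nat where N: "real (Suc N) * \<gamma> powr P > R powr P"
    proof -
      obtain N where "R powr P / \<gamma> powr P < real N" using reals_Archimedean2 by blast
      then have "R powr P < real N * \<gamma> powr P" using eg(1) by (simp add: divide_less_eq)
      also have "\<dots> \<le> real (Suc N) * \<gamma> powr P" by (intro mult_right_mono) auto
      finally show ?thesis using that by blast
    qed
    define S where "S = {-1 .. int (N * K)}"
    define x where "x n = (if n \<in> S then u n else 0)" for n
    have finS: "finite S" unfolding S_def by simp
    have xl: "x \<in> lp p" by (rule lp_finite_support[OF p finS]) (simp add: x_def)
    define F where "F = {-2, -1, int (N * K), int (N * K) + 1}"
    have finF: "finite F" unfolding F_def by simp
    have Hx0: "schroedinger v x n = 0" if n: "n \<notin> F" for n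
    proof (cases "0 \<le> n \<and> n \<le> int (N * K) - 1")
      case True
      then have "n + 1 \<in> S" "n - 1 \<in> S" "n \<in> S" unfolding S_def by auto
      then have "schroedinger v x n = schroedinger v u n" unfolding schroedinger_def x_def by simp
      then show ?thesis using Hu by simp
    next
      case False
      then have "n + 1 \<notin> S" "n - 1 \<notin> S" "n \<notin> S" using n unfolding S_def F_def by auto
      then show ?thesis unfolding schroedinger_def x_def by simp
    qed
    have xb: "norm (x n) \<le> Bu" for n unfolding x_def using ub Bu0 by auto
    have Hxb: "norm (schroedinger v x n) \<le> Y" for n
    proof -
      have "norm (schroedinger v x n) \<le> norm (x (n + 1) + x (n - 1)) + norm (complex_of_real (v n) * x n)"
        unfolding schroedinger_def by (rule norm_triangle_ineq)
      also have "\<dots> \<le> norm (x (n + 1)) + norm (x (n - 1)) + \<bar>v n\<bar> * norm (x n)"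
        by (simp add: norm_mult norm_triangle_ineq)
      also have "\<dots> \<le> Bu + Bu + (\<Sum>r<K. \<bar>v (int r)\<bar>) * Bu"
        by (intro add_mono mult_mono xb Vb) (auto simp: Bu0)
      also have "\<dots> = Y" unfolding Y_def by (simp add: algebra_simps)
      finally show ?thesis .
    qed
    have Hxl: "schroedinger v x \<in> lp p" by (rule lp_finite_support[OF p finF]) (use Hx0 in auto)
    have cardF: "card F \<le> 4" unfolding F_def by (rule order_trans[OF card_insert_le_m1]) (auto simp: card_insert_le_m1)
    have "lp_norm p (schroedinger v x) = (\<Sum>n\<in>F. norm (schroedinger v x n) powr P) powr (1 / P)"
      unfolding P_def by (rule lp_norm_finite_support[OF p False finF]) (use Hx0 in auto)
    also have "\<dots> \<le> (4 * Y powr P) powr (1 / P)"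
    proof (rule powr_mono2)
      have "(\<Sum>n\<in>F. norm (schroedinger v x n) powr P) \<le> (\<Sum>n\<in>F. Y powr P)"
        using Hxb P by (intro sum_mono powr_mono2) auto
      also have "\<dots> = card F * Y powr P" by simp
      also have "\<dots> \<le> 4 * Y powr P" using cardF by (intro mult_right_mono) auto
      finally show "(\<Sum>n\<in>F. norm (schroedinger v x n) powr P) \<le> 4 * Y powr P" .
    qed (use P in \<open>auto intro: sum_nonneg\<close>)
    finally have HxQ: "lp_norm p (schroedinger v x) \<le> (4 * Y powr P) powr (1 / P)" .
    have "lp_norm p x = lp_norm p (B (schroedinger v x))" using BH[OF xl] by simp
    also have "\<dots> \<le> Cb * lp_norm p (schroedinger v x)" by (rule Cb[OF Hxl])
    also have "\<dots> \<le> \<bar>Cb\<bar> * lp_norm p (schroedinger v x)"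
      using lp_norm_nonneg[OF p Hxl] by (intro mult_right_mono) auto
    also have "\<dots> \<le> R" unfolding R_def using HxQ by (intro mult_left_mono) auto
    finally have xR: "lp_norm p x \<le> R" .
    define J where "J = (\<lambda>j. int (j * K) + e) ` {0..N}"
    have JS: "J \<subseteq> S"
    proof
      fix n assume "n \<in> J"
      then obtain j where j: "j \<le> N" "n = int (j * K) + e" unfolding J_def by auto
      have "j * K \<le> N * K" using j by simp
      then have jN: "int (j * K) \<le> int (N * K)" by linarith
      have jk0: "0 \<le> int (j * K)" by (rule of_nat_0_le_iff)
      have e: "e = -1 \<or> e = 0" using eg(3) by simp
      have "-1 \<le> n \<and> n \<le> int (N * K)"
      proof (cases "e = 0")
        case True then show ?thesis using j(2) jN jk0 by linarith
      next
        case False then have "e = -1" using e by simp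
        then show ?thesis using j(2) jN jk0 by linarith
      qed
      then show "n \<in> S" unfolding S_def by simp
    qed
    have injJ: "inj_on (\<lambda>j. int (j * K) + e) {0..N}" unfolding inj_on_def using K by auto
    have "real (Suc N) * \<gamma> powr P = (\<Sum>j\<in>{0..N}. norm (u (int (j * K) + e)) powr P)" using eg(2) by simp
    also have "\<dots> = (\<Sum>n\<in>J. norm (u n) powr P)" unfolding J_def by (simp only: sum.reindex[OF injJ] o_def)
    also have "\<dots> = (\<Sum>n\<in>J. norm (x n) powr P)" using JS unfolding x_def by (intro sum.cong) auto
    also have "\<dots> \<le> (\<Sum>n\<in>S. norm (x n) powr P)" by (rule sum_mono2[OF finS JS]) auto
    finally have lo: "real (Suc N) * \<gamma> powr P \<le> (\<Sum>n\<in>S. norm (x n) powr P)" .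
    have "lp_norm p x = (\<Sum>n\<in>S. norm (x n) powr P) powr (1 / P)"
      unfolding P_def by (rule lp_norm_finite_support[OF p False finS]) (simp add: x_def)
    also have "\<dots> \<ge> (real (Suc N) * \<gamma> powr P) powr (1 / P)" using lo P by (intro powr_mono2) auto
    finally have "(real (Suc N) * \<gamma> powr P) powr (1 / P) \<le> R" using xR by simp
    moreover have "R = (R powr P) powr (1 / P)" using R0 P by (simp add: powr_powr)
    moreover have "(R powr P) powr (1 / P) < (real (Suc N) * \<gamma> powr P) powr (1 / P)"
      using N P by (intro powr_less_mono2) auto
    ultimately show False by simp
  qed
qed

theorem theorem1p2:
  fixes p :: ereal and v :: "int \<Rightarrow> real" and K :: nat
  assumes p: "1 \<le> p"
    and K: "K \<ge> 1"
    and per: "\<forall>n. v (n + int K) = v n"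
    and cases: "K = 2
             \<or> (K \<le> 8 \<and> (\<exists>lam\<in>\<rat>. \<forall>n. v n \<in> {0, lam}))
             \<or> (\<forall>n. v n \<in> \<int>)"
  shows "fsm_applicable p (schroedinger v) \<longleftrightarrow> \<bar>trace (monodromy v K)\<bar> > 2"
proof
  assume "fsm_applicable p (schroedinger v)"
  then have "invertible_lp p (schroedinger v)" unfolding fsm_applicable_def by blast
  then show "\<bar>trace (monodromy v K)\<bar> > 2" by (rule forward[OF p K per])
next
  assume "\<bar>trace (monodromy v K)\<bar> > 2"
  then show "fsm_applicable p (schroedinger v)" by (rule backward[OF p K per cases])
qed

end
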